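(* Let $n\ge1$, $K\ge0$, and let $t,q$ be generic. The functions $L(\mathbf{u};\mathbf{v})=\sum_{|\mathbf{k}|=K}X_{\mathbf{k}}(\mathbf{u};\mathbf{v})$ and $R(\mathbf{u};\mathbf{v})=\sum_{|\mathbf{k}|=K}Y_{\mathbf{k}}(\mathbf{u};\mathbf{v})$ (sums over $\mathbf{k}\in\mathbb{Z}_{\ge0}^n$ with $k_1+\dots+k_n=K$) have no poles along the hypersurfaces $u_i=q^pu_j$ and $v_a=q^pv_b$ for $i\ne j$, $a\ne b$, $p\in\mathbb{Z}$.
   Context: Fix square roots of the complex variables $u_i,v_a,t,q$ and interpret $z^{1/2}$ for monomials $z$ in these variables multiplicatively. For an integer $m\ge0$, $[z;q]_m=\prod_{l=0}^{m-1}(q^{l/2}z^{1/2}-q^{-l/2}z^{-1/2})$. For $\mathbf{k}\in\mathbb{Z}_{\ge0}^n$, $\mathbf{u}=(u_1,\dots,u_n)$, $\mathbf{v}=(v_1,\dots,v_n)$: $X_{\mathbf{k}}(\mathbf{u};\mathbf{v})=\prod_{i=1}^n\frac{[qt;q]_{k_i}}{[q;q]_{k_i}}\prod_{i\ne j}\frac{[t^{-1}q^{-k_j}u_i/u_j;q]_{k_i}}{[q^{-k_j}u_i/u_j;q]_{k_i}}\prod_{a,j=1}^n\frac{[tu_j/v_a;q]_{k_j}}{[u_j/v_a;q]_{k_j}}$, $Y_{\mathbf{k}}(\mathbf{u};\mathbf{v})=\prod_{a=1}^n\frac{[qt;q]_{k_a}}{[q;q]_{k_a}}\prod_{a\ne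 b}\frac{[t^{-1}q^{-k_a}v_a/v_b;q]_{k_b}}{[q^{-k_a}v_a/v_b;q]_{k_b}}\prod_{a,j=1}^n\frac{[tu_j/v_a;q]_{k_a}}{[u_j/v_a;q]_{k_a}}$. *)

theory Defs
  imports "HOL-Analysis.Analysis"
begin

(* Everything is expressed in the fixed square roots:
   U$i = u_i^(1/2), V$a = v_a^(1/2), T = t^(1/2), Q = q^(1/2).
   For a monomial z with chosen square root w = z^(1/2),
   [z;q]_m = prod_{l<m} (q^(l/2) z^(1/2) - q^(-l/2) z^(-1/2))
           = prod_{l<m} (Q^l w - (Q^l w)^(-1)). *)
definition qbr :: "complex \<Rightarrow> complex \<Rightarrow> nat \<Rightarrow> complex" where
  "qbr w Q m = (\<Prod>l<m. Q ^ l * w - inverse (Q ^ l * w))"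

definition Xk :: "complex \<Rightarrow> complex \<Rightarrow> ('n::finite \<Rightarrow> nat) \<Rightarrow> complex^'n \<Rightarrow> complex^'n \<Rightarrow> complex" where
  "Xk T Q k U V =
     (\<Prod>i\<in>UNIV. qbr (Q * T) Q (k i) / qbr Q Q (k i)) *
     (\<Prod>i\<in>UNIV. \<Prod>j\<in>UNIV - {i}.
        qbr (inverse T * inverse (Q ^ k j) * U$i / U$j) Q (k i) /
        qbr (inverse (Q ^ k j) * U$i / U$j) Q (k i)) *
     (\<Prod>a\<in>UNIV. \<Prod>j\<in>UNIV.
        qbr (T * U$j / V$a) Q (k j) / qbr (U$j / V$a) Q (k j))"

definition Yk :: "complex \<Rightarrow> complex \<Rightarrow> ('n::finite \<Rightarrow> nat) \<Rightarrow> complex^'n \<Rightarrow> complex^'n \<Rightarrow> complex" where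
  "Yk T Q k U V =
     (\<Prod>a\<in>UNIV. qbr (Q * T) Q (k a) / qbr Q Q (k a)) *
     (\<Prod>a\<in>UNIV. \<Prod>b\<in>UNIV - {a}.
        qbr (inverse T * inverse (Q ^ k a) * V$a / V$b) Q (k b) /
        qbr (inverse (Q ^ k a) * V$a / V$b) Q (k b)) *
     (\<Prod>a\<in>UNIV. \<Prod>j\<in>UNIV.
        qbr (T * U$j / V$a) Q (k a) / qbr (U$j / V$a) Q (k a))"

definition Lsum :: "complex \<Rightarrow> complex \<Rightarrow> nat \<Rightarrow> complex^'n::finite \<Rightarrow> complex^'n \<Rightarrow> complex" where
  "Lsum T Q K U V = (\<Sum>k\<in>{k::'n \<Rightarrow> nat. sum k UNIV = K}. Xk T Q k U V)"

definition Rsum :: "complex \<Rightarrow> complex \<Rightarrow> nat \<Rightarrow> complex^'n::finite \<Rightarrow> complex^'n \<Rightarrow> complex" where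
  "Rsum T Q K U V = (\<Sum>k\<in>{k::'n \<Rightarrow> nat. sum k UNIV = K}. Yk T Q k U V)"

definition generic_pt :: "complex \<Rightarrow> ((complex^'n::finite) \<times> (complex^'n)) set" where
  "generic_pt Q = {(U, V).
     (\<forall>i. U$i \<noteq> 0) \<and> (\<forall>a. V$a \<noteq> 0) \<and>
     (\<forall>i j (p::int). i \<noteq> j \<longrightarrow> (U$i)^2 \<noteq> (Q^2) powi p * (U$j)^2) \<and>
     (\<forall>a b (p::int). a \<noteq> b \<longrightarrow> (V$a)^2 \<noteq> (Q^2) powi p * (V$b)^2) \<and>
     (\<forall>j a (p::int). (U$j)^2 \<noteq> (Q^2) powi p * (V$a)^2)}"

definition generic_on_uu :: "complex \<Rightarrow> 'n::finite \<Rightarrow> 'n \<Rightarrow> int \<Rightarrow> ((complex^'n) \<times> (complex^'n)) set" where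
  "generic_on_uu Q i0 j0 p0 = {(U, V).
     (\<forall>i. U$i \<noteq> 0) \<and> (\<forall>a. V$a \<noteq> 0) \<and>
     (U$i0)^2 = (Q^2) powi p0 * (U$j0)^2 \<and>
     (\<forall>i j (p::int). i \<noteq> j \<and> {i, j} \<noteq> {i0, j0} \<longrightarrow> (U$i)^2 \<noteq> (Q^2) powi p * (U$j)^2) \<and>
     (\<forall>a b (p::int). a \<noteq> b \<longrightarrow> (V$a)^2 \<noteq> (Q^2) powi p * (V$b)^2) \<and>
     (\<forall>j a (p::int). (U$j)^2 \<noteq> (Q^2) powi p * (V$a)^2)}"

definition generic_on_vv :: "complex \<Rightarrow> 'n::finite \<Rightarrow> 'n \<Rightarrow> int \<Rightarrow> ((complex^'n) \<times> (complex^'n)) set" where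
  "generic_on_vv Q a0 b0 p0 = {(U, V).
     (\<forall>i. U$i \<noteq> 0) \<and> (\<forall>a. V$a \<noteq> 0) \<and>
     (V$a0)^2 = (Q^2) powi p0 * (V$b0)^2 \<and>
     (\<forall>i j (p::int). i \<noteq> j \<longrightarrow> (U$i)^2 \<noteq> (Q^2) powi p * (U$j)^2) \<and>
     (\<forall>a b (p::int). a \<noteq> b \<and> {a, b} \<noteq> {a0, b0} \<longrightarrow> (V$a)^2 \<noteq> (Q^2) powi p * (V$b)^2) \<and>
     (\<forall>j a (p::int). (U$j)^2 \<noteq> (Q^2) powi p * (V$a)^2)}"

end

theory Submission
  imports Defs "HOL-Library.Multiset"
begin

definition ph :: "complex \<Rightarrow> complex" where "ph y = y - inverse y"

lemma qbr_ph: "qbr w Q m = (\<Prod>l<m. ph (Q^l * w))"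
  by (simp add: qbr_def ph_def)

lemma ph_neg: "ph (- y) = - ph y" by (simp add: ph_def)
lemma ph_inv: "ph (inverse y) = - ph y" by (simp add: ph_def)
lemma ph_sgn: "e = 1 \<or> e = -1 \<Longrightarrow> ph (e * y) = e * ph y"
  by (auto simp: ph_def)

definition Up :: "int \<Rightarrow> nat \<Rightarrow> int multiset" where
  "Up lo n = image_mset (\<lambda>l. lo + int l) (mset_set {..<n})"
definition Dn :: "int \<Rightarrow> nat \<Rightarrow> int multiset" where
  "Dn hi n = image_mset (\<lambda>l. hi - int l) (mset_set {..<n})"

lemma count_Up: "count (Up lo n) r = (if lo \<le> r \<and> r < lo + int n then 1 else 0)"
proof -
  have inj: "inj_on (\<lambda>l. lo + int l) {..<n}" by (auto simp: inj_on_def)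
  have "(r \<in> (\<lambda>l. lo + int l) ` {..<n}) = (lo \<le> r \<and> r < lo + int n)"
  proof
    assume "lo \<le> r \<and> r < lo + int n"
    then show "r \<in> (\<lambda>l. lo + int l) ` {..<n}"
      by (intro image_eqI[where x="nat (r - lo)"]) auto
  qed auto
  then show ?thesis unfolding Up_def image_mset_mset_set[OF inj]
    by (simp add: count_mset_set')
qed

lemma count_Dn: "count (Dn hi n) r = (if hi - int n < r \<and> r \<le> hi then 1 else 0)"
proof -
  have inj: "inj_on (\<lambda>l. hi - int l) {..<n}" by (auto simp: inj_on_def)
  have "(r \<in> (\<lambda>l. hi - int l) ` {..<n}) = (hi - int n < r \<and> r \<le> hi)"
  proof
    assume "hi - int n < r \<and> r \<le> hi"
    then show "r \<in> (\<lambda>l. hi - int l) ` {..<n}"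
      by (intro image_eqI[where x="nat (hi - r)"]) auto
  qed auto
  then show ?thesis unfolding Dn_def image_mset_mset_set[OF inj]
    by (simp add: count_mset_set')
qed

definition Pm :: "(int \<Rightarrow> complex) \<Rightarrow> int multiset \<Rightarrow> complex" where
  "Pm f M = prod_mset (image_mset f M)"

lemma Pm_union: "Pm f (M + N) = Pm f M * Pm f N" by (simp add: Pm_def)

lemma prod_Up: "(\<Prod>l<n. f (lo + int l)) = Pm f (Up lo n)"
  by (simp add: Pm_def Up_def prod_unfold_prod_mset multiset.map_comp o_def)
lemma prod_Dn: "(\<Prod>l<n. f (hi - int l)) = Pm f (Dn hi n)"
  by (simp add: Pm_def Dn_def prod_unfold_prod_mset multiset.map_comp o_def)

lemma count_abs: "count (image_mset abs (M::int multiset)) r =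
   (if r < 0 then 0 else if r = 0 then count M 0 else count M r + count M (-r))"
proof (induction M)
  case empty then show ?case by simp
next
  case (add x M)
  have "count (image_mset abs (add_mset x M)) r = count (image_mset abs M) r + (if abs x = r then 1 else 0)"
    by simp
  then show ?case using add.IH
    by (cases "r < 0"; cases "r = 0"; cases "x = r"; cases "x = -r"; simp add: abs_if)
qed

lemma Pm_abs:
  assumes "\<And>r. f (-r) = - f r"
  shows "Pm f M = (-1) ^ size (filter_mset (\<lambda>r. r < 0) M) * Pm f (image_mset abs M)"
proof (induction M)
  case empty then show ?case by (simp add: Pm_def)
next
  case (add x M)
  show ?case
  proof (cases "x < 0")
    case True
    have "f x = - f (abs x)" using assms[of "abs x"] True by simp
    then show ?thesis using add True by (simp add: Pm_def)
  next
    case False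
    then show ?thesis using add by (simp add: Pm_def)
  qed
qed

lemma size_neg_Up: "size (filter_mset (\<lambda>r. r < 0) (Up lo n)) = nat (min (lo + int n) 0 - min lo 0)"
proof (induction n)
  case 0 then show ?case by (simp add: Up_def)
next
  case (Suc n)
  have "Up lo (Suc n) = Up lo n + {#lo + int n#}"
    by (simp add: Up_def lessThan_Suc)
  then show ?case using Suc by auto
qed


lemma count_uminus: "count (image_mset uminus (M::int multiset)) r = count M (-r)"
proof (induction M)
  case (add x M) then show ?case by (cases "x = -r") auto
qed simp

lemma T_multiset_eq:
  fixes a b a' b' :: nat and p :: int
  assumes "int b - int a < p" "p \<le> b" "int a' = b - p" "int b' = a + p"
  shows "Up 1 a + Up 1 b + image_mset uminus (Up (p - b) a) + image_mset uminus (Up (- a - p) b)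
       = Up 1 a' + Up 1 b' + image_mset uminus (Up (p - b') a') + image_mset uminus (Up (- a' - p) b')"
  unfolding multiset_eq_iff
proof
  fix r
  show "count (Up 1 a + Up 1 b + image_mset uminus (Up (p - b) a) + image_mset uminus (Up (- a - p) b)) r =
        count (Up 1 a' + Up 1 b' + image_mset uminus (Up (p - b') a') + image_mset uminus (Up (- a' - p) b')) r"
    using assms unfolding count_union count_uminus count_Up by simp
qed

lemma Q_multiset_abs_eq:
  fixes a b a' b' :: nat and p :: int
  assumes "int b - int a < p" "p \<le> b" "int a' = b - p" "int b' = a + p"
  shows "image_mset abs (Up 1 a + Up 1 b + (Up (p - b) a - {#0#}) + Up (- a - p) b)
       = image_mset abs (Up 1 a' + Up 1 b' + Up (p - b') a' + (Up (- a' - p) b' - {#0#}))"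
  unfolding multiset_eq_iff
proof
  fix r :: int
  show "count (image_mset abs (Up 1 a + Up 1 b + (Up (p - b) a - {#0#}) + Up (- a - p) b)) r =
        count (image_mset abs (Up 1 a' + Up 1 b' + Up (p - b') a' + (Up (- a' - p) b' - {#0#}))) r"
    using assms unfolding count_abs count_union count_diff count_single count_Up by simp
qed

lemma filter_neg_minus0: "filter_mset (\<lambda>r::int. r < 0) (M - {#0#}) = filter_mset (\<lambda>r. r < 0) M"
  by (simp add: multiset_eq_iff)

lemma Q_parity:
  fixes a b a' b' :: nat and p :: int
  assumes "int b - int a < p" "p \<le> b" "int a' = b - p" "int b' = a + p"
  shows "(-1::complex) ^ size (filter_mset (\<lambda>r. r < 0) (Up 1 a + Up 1 b + (Up (p - b) a - {#0#}) + Up (- a - p) b))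
       = (-1) ^ size (filter_mset (\<lambda>r. r < 0) (Up 1 a' + Up 1 b' + Up (p - b') a' + (Up (- a' - p) b' - {#0#})))"
proof -
  have e: "(nat (min (1 + int a) 0 - min 1 0) + nat (min (1 + int b) 0 - min 1 0) + nat (min (p - b + int a) 0 - min (p - b) 0) + nat (min (- a - p + int b) 0 - min (- a - p) 0))
    = (nat (min (1 + int a') 0 - min 1 0) + nat (min (1 + int b') 0 - min 1 0) + nat (min (p - b' + int a') 0 - min (p - b') 0) + nat (min (- a' - p + int b') 0 - min (- a' - p) 0))"
    using assms by (auto simp: min_def split: if_splits)
  show ?thesis
    unfolding filter_union_mset filter_neg_minus0 size_union size_neg_Up
    using e by simp
qed


definition qbrX :: "complex \<Rightarrow> complex \<Rightarrow> nat \<Rightarrow> nat \<Rightarrow> complex" where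
  "qbrX w Q m l0 = (\<Prod>l\<in>{..<m} - {l0}. ph (Q^l * w))"

lemma qbr_split: "l0 < m \<Longrightarrow> qbr w Q m = ph (Q^l0 * w) * qbrX w Q m l0"
  unfolding qbr_ph qbrX_def by (subst prod.remove[of _ l0]) auto

lemma powi_combine:
  fixes Q :: complex
  assumes "Q \<noteq> 0"
  shows "Q^l * inverse (Q^b) * Q powi p = Q powi (p - int b + int l)"
  using assms by (simp add: power_int_add power_int_diff power_int_minus field_simps)

lemma powi_combine2:
  fixes Q :: complex
  assumes "Q \<noteq> 0"
  shows "Q^l * inverse (Q^a) * Q powi (-p) = Q powi (- int a - p + int l)"
  using assms by (simp add: power_int_add power_int_diff power_int_minus field_simps)

lemma eps_cases: "e = 1 \<or> e = -1 \<Longrightarrow> inverse (e::complex) = e" by auto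

lemma evalA:
  fixes Q c e :: complex
  assumes Q: "Q \<noteq> 0" and e: "e = 1 \<or> e = -1"
  shows "qbr (c * inverse (Q^b) * (e * Q powi p)) Q a = e^a * Pm (\<lambda>r. ph (c * Q powi r)) (Up (p - b) a)"
proof -
  have "qbr (c * inverse (Q^b) * (e * Q powi p)) Q a = (\<Prod>l<a. e * ph (c * Q powi (p - int b + int l)))"
    unfolding qbr_ph
  proof (rule prod.cong[OF refl])
    fix l
    have "Q^l * (c * inverse (Q^b) * (e * Q powi p)) = e * (c * (Q^l * inverse (Q^b) * Q powi p))"
      by (simp add: ac_simps)
    also have "\<dots> = e * (c * Q powi (p - int b + int l))" by (simp only: powi_combine[OF Q])
    finally have h: "Q^l * (c * inverse (Q^b) * (e * Q powi p)) = e * (c * Q powi (p - int b + int l))" .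
    show "ph (Q^l * (c * inverse (Q^b) * (e * Q powi p))) = e * ph (c * Q powi (p - int b + int l))"
      by (simp only: h ph_sgn[OF e])
  qed
  also have "\<dots> = e^a * Pm (\<lambda>r. ph (c * Q powi r)) (Up (p - b) a)"
    by (simp add: prod.distrib prod_Up[where f="\<lambda>r. ph (c * Q powi r)"])
  finally show ?thesis .
qed

lemma evalB:
  fixes Q c e :: complex
  assumes Q: "Q \<noteq> 0" and e: "e = 1 \<or> e = -1"
  shows "qbr (c * inverse (Q^a) * inverse (e * Q powi p)) Q b = e^b * Pm (\<lambda>r. ph (c * Q powi r)) (Up (- a - p) b)"
proof -
  have "qbr (c * inverse (Q^a) * inverse (e * Q powi p)) Q b = (\<Prod>l<b. e * ph (c * Q powi (- int a - p + int l)))"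
    unfolding qbr_ph
  proof (rule prod.cong[OF refl])
    fix l
    have "Q^l * (c * inverse (Q^a) * inverse (e * Q powi p)) = e * (c * (Q^l * inverse (Q^a) * Q powi (-p)))"
      using eps_cases[OF e] by (simp add: ac_simps power_int_minus)
    also have "\<dots> = e * (c * Q powi (- int a - p + int l))" by (simp only: powi_combine2[OF Q])
    finally have h: "Q^l * (c * inverse (Q^a) * inverse (e * Q powi p)) = e * (c * Q powi (- int a - p + int l))" .
    show "ph (Q^l * (c * inverse (Q^a) * inverse (e * Q powi p))) = e * ph (c * Q powi (- int a - p + int l))"
      by (simp only: h ph_sgn[OF e])
  qed
  also have "\<dots> = e^b * Pm (\<lambda>r. ph (c * Q powi r)) (Up (- a - p) b)"
    by (simp add: prod.distrib prod_Up[where f="\<lambda>r. ph (c * Q powi r)"])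
  finally show ?thesis .
qed

lemma prodX_Up:
  assumes "l0 < n"
  shows "(\<Prod>l\<in>{..<n} - {l0}. f (lo + int l)) = Pm f (Up lo n - {#lo + int l0#})"
proof -
  have "mset_set ({..<n} - {l0}) = mset_set {..<n} - {#l0#}"
    using assms by (simp add: mset_set_Diff)
  moreover have "{#l0#} \<subseteq># mset_set {..<n}" using assms by simp
  ultimately show ?thesis
    by (simp add: Pm_def Up_def prod_unfold_prod_mset multiset.map_comp o_def image_mset_Diff)
qed

lemma evalAX:
  fixes Q e :: complex
  assumes Q: "Q \<noteq> 0" and e: "e = 1 \<or> e = -1" and l0: "l0 < a"
  shows "qbrX (inverse (Q^b) * (e * Q powi p)) Q a l0 = e^(a - 1) * Pm (\<lambda>r. ph (Q powi r)) (Up (p - b) a - {#p - b + int l0#})"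
proof -
  have "qbrX (inverse (Q^b) * (e * Q powi p)) Q a l0 = (\<Prod>l\<in>{..<a} - {l0}. e * ph (Q powi (p - int b + int l)))"
    unfolding qbrX_def
  proof (rule prod.cong[OF refl])
    fix l
    have "Q^l * (inverse (Q^b) * (e * Q powi p)) = e * (Q^l * inverse (Q^b) * Q powi p)"
      by (simp add: ac_simps)
    also have "\<dots> = e * Q powi (p - int b + int l)" by (simp only: powi_combine[OF Q])
    finally have h: "Q^l * (inverse (Q^b) * (e * Q powi p)) = e * Q powi (p - int b + int l)" .
    show "ph (Q^l * (inverse (Q^b) * (e * Q powi p))) = e * ph (Q powi (p - int b + int l))"
      by (simp only: h ph_sgn[OF e])
  qed
  also have "\<dots> = e^(a - 1) * Pm (\<lambda>r. ph (Q powi r)) (Up (p - b) a - {#p - b + int l0#})"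
    using l0 by (simp add: prod.distrib prodX_Up[where f="\<lambda>r. ph (Q powi r)"])
  finally show ?thesis .
qed

lemma evalBX:
  fixes Q e :: complex
  assumes Q: "Q \<noteq> 0" and e: "e = 1 \<or> e = -1" and l0: "l0 < b"
  shows "qbrX (inverse (Q^a) * inverse (e * Q powi p)) Q b l0 = e^(b - 1) * Pm (\<lambda>r. ph (Q powi r)) (Up (- a - p) b - {#- a - p + int l0#})"
proof -
  have "qbrX (inverse (Q^a) * inverse (e * Q powi p)) Q b l0 = (\<Prod>l\<in>{..<b} - {l0}. e * ph (Q powi (- int a - p + int l)))"
    unfolding qbrX_def
  proof (rule prod.cong[OF refl])
    fix l
    have "Q^l * (inverse (Q^a) * inverse (e * Q powi p)) = e * (Q^l * inverse (Q^a) * Q powi (-p))"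
      using eps_cases[OF e] by (simp add: ac_simps power_int_minus)
    also have "\<dots> = e * Q powi (- int a - p + int l)" by (simp only: powi_combine2[OF Q])
    finally have h: "Q^l * (inverse (Q^a) * inverse (e * Q powi p)) = e * Q powi (- int a - p + int l)" .
    show "ph (Q^l * (inverse (Q^a) * inverse (e * Q powi p))) = e * ph (Q powi (- int a - p + int l))"
      by (simp only: h ph_sgn[OF e])
  qed
  also have "\<dots> = e^(b - 1) * Pm (\<lambda>r. ph (Q powi r)) (Up (- a - p) b - {#- a - p + int l0#})"
    using l0 by (simp add: prod.distrib prodX_Up[where f="\<lambda>r. ph (Q powi r)"])
  finally show ?thesis .
qed

lemma evalC:
  fixes Q c :: complex
  assumes Q: "Q \<noteq> 0"
  shows "qbr (Q * c) Q a = Pm (\<lambda>r. ph (c * Q powi r)) (Up 1 a)"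
  unfolding qbr_ph prod_Up[where f="\<lambda>r. ph (c * Q powi r)", symmetric]
  using Q by (intro prod.cong refl) (simp add: power_int_add ac_simps)

lemma Pm_invT:
  fixes T Q :: complex
  assumes T: "T \<noteq> 0" and Q: "Q \<noteq> 0"
  shows "Pm (\<lambda>r. ph (inverse T * Q powi r)) M = (-1)^size M * Pm (\<lambda>r. ph (T * Q powi r)) (image_mset uminus M)"
proof (induction M)
  case empty then show ?case by (simp add: Pm_def)
next
  case (add x M)
  have "ph (inverse T * Q powi x) = - ph (T * Q powi (-x))"
    using ph_inv[of "T * Q powi (-x)"] T Q by (simp add: power_int_minus)
  then show ?case using add by (simp add: Pm_def)
qed


definition g1 :: "complex \<Rightarrow> complex \<Rightarrow> nat \<Rightarrow> nat \<Rightarrow> complex \<Rightarrow> nat \<Rightarrow> complex" where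
  "g1 T Q a b x l0 = qbr (Q*T) Q a * qbr (Q*T) Q b * qbr (inverse T * inverse (Q^b) * x) Q a
      * qbr (inverse T * inverse (Q^a) * inverse x) Q b
      / (qbr Q Q a * qbr Q Q b * qbrX (inverse (Q^b) * x) Q a l0 * qbr (inverse (Q^a) * inverse x) Q b)"

definition g2 :: "complex \<Rightarrow> complex \<Rightarrow> nat \<Rightarrow> nat \<Rightarrow> complex \<Rightarrow> nat \<Rightarrow> complex" where
  "g2 T Q a b x l0 = qbr (Q*T) Q a * qbr (Q*T) Q b * qbr (inverse T * inverse (Q^b) * x) Q a
      * qbr (inverse T * inverse (Q^a) * inverse x) Q b
      / (qbr Q Q a * qbr Q Q b * qbr (inverse (Q^b) * x) Q a * qbrX (inverse (Q^a) * inverse x) Q b l0)"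

lemma size_Up[simp]: "size (Up lo n) = n" by (simp add: Up_def)

lemma fQ_odd: "Q \<noteq> 0 \<Longrightarrow> ph (Q powi (-r)) = - ph (Q powi r)"
  using ph_inv[of "Q powi r"] by (simp add: power_int_minus)

lemma core_identity:
  fixes T Q e :: complex and a b a' b' :: nat and p :: int
  assumes T: "T \<noteq> 0" and Q: "Q \<noteq> 0" and e: "e = 1 \<or> e = -1"
    and c1: "int b - int a < p" "p \<le> b" and a': "int a' = b - p" and b': "int b' = a + p"
  shows "g1 T Q a b (e * Q powi p) (nat (b - p)) = g2 T Q a' b' (e * Q powi p) b"
proof -
  define fT where "fT = (\<lambda>r. ph (T * Q powi r))"
  define fQ where "fQ = (\<lambda>r. ph (Q powi r))"
  define \<rho> where "\<rho> = e * Q powi p"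
  have l0a: "nat (b - p) < a" and l0b: "b < b'" using c1 b' by auto
  have a1: "a \<ge> 1" and b1: "b' \<ge> 1" using l0a l0b by auto
  have sum: "a' + b' = a + b" using a' b' by linarith
  have CT: "\<And>n. qbr (Q*T) Q n = Pm fT (Up 1 n)" unfolding fT_def using evalC[OF Q] by simp
  have CQ: "\<And>n. qbr Q Q n = Pm fQ (Up 1 n)" unfolding fQ_def using evalC[OF Q, of 1] by simp
  have A: "\<And>a b. qbr (inverse T * inverse (Q^b) * \<rho>) Q a = e^a * (-1)^a * Pm fT (image_mset uminus (Up (p - b) a))"
    unfolding \<rho>_def fT_def by (subst evalA[OF Q e]) (simp add: Pm_invT[OF T Q])
  have B: "\<And>a b. qbr (inverse T * inverse (Q^a) * inverse \<rho>) Q b = e^b * (-1)^b * Pm fT (image_mset uminus (Up (- a - p) b))"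
    unfolding \<rho>_def fT_def by (subst evalB[OF Q e]) (simp add: Pm_invT[OF T Q])
  have A1: "\<And>a b. qbr (inverse (Q^b) * \<rho>) Q a = e^a * Pm fQ (Up (p - b) a)"
    unfolding \<rho>_def fQ_def using evalA[OF Q e, where c=1] by (simp only: mult_1_left)
  have B1: "\<And>a b. qbr (inverse (Q^a) * inverse \<rho>) Q b = e^b * Pm fQ (Up (- a - p) b)"
    unfolding \<rho>_def fQ_def using evalB[OF Q e, where c=1] by (simp only: mult_1_left)
  have AX: "qbrX (inverse (Q^b) * \<rho>) Q a (nat (b - p)) = e^(a - 1) * Pm fQ (Up (p - b) a - {#0#})"
    unfolding \<rho>_def fQ_def using evalAX[OF Q e l0a, of b p] c1 by simp
  have BX: "qbrX (inverse (Q^a') * inverse \<rho>) Q b' b = e^(b' - 1) * Pm fQ (Up (- a' - p) b' - {#0#})"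
    unfolding \<rho>_def fQ_def using evalBX[OF Q e l0b, of a' p] a' by simp
  have N: "qbr (Q*T) Q a * qbr (Q*T) Q b * qbr (inverse T * inverse (Q^b) * \<rho>) Q a
      * qbr (inverse T * inverse (Q^a) * inverse \<rho>) Q b
      = qbr (Q*T) Q a' * qbr (Q*T) Q b' * qbr (inverse T * inverse (Q^b') * \<rho>) Q a'
      * qbr (inverse T * inverse (Q^a') * inverse \<rho>) Q b'"
  proof -
    have "qbr (Q*T) Q a * qbr (Q*T) Q b * qbr (inverse T * inverse (Q^b) * \<rho>) Q a
      * qbr (inverse T * inverse (Q^a) * inverse \<rho>) Q b
      = (e^(a+b) * (-1)^(a+b)) * Pm fT (Up 1 a + Up 1 b + image_mset uminus (Up (p - b) a) + image_mset uminus (Up (- a - p) b))"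
      unfolding CT A B Pm_union power_add by (simp add: ac_simps)
    also have "\<dots> = (e^(a'+b') * (-1)^(a'+b')) * Pm fT (Up 1 a' + Up 1 b' + image_mset uminus (Up (p - b') a') + image_mset uminus (Up (- a' - p) b'))"
      by (simp only: T_multiset_eq[OF c1 a' b'] sum)
    also have "\<dots> = qbr (Q*T) Q a' * qbr (Q*T) Q b' * qbr (inverse T * inverse (Q^b') * \<rho>) Q a'
      * qbr (inverse T * inverse (Q^a') * inverse \<rho>) Q b'"
      unfolding CT A B Pm_union power_add by (simp add: ac_simps)
    finally show ?thesis .
  qed
  have D: "qbr Q Q a * qbr Q Q b * qbrX (inverse (Q^b) * \<rho>) Q a (nat (b - p)) * qbr (inverse (Q^a) * inverse \<rho>) Q b
         = qbr Q Q a' * qbr Q Q b' * qbr (inverse (Q^b') * \<rho>) Q a' * qbrX (inverse (Q^a') * inverse \<rho>) Q b' b"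
  proof -
    have odd: "\<And>r. fQ (-r) = - fQ r" unfolding fQ_def using fQ_odd[OF Q] by blast
    have "qbr Q Q a * qbr Q Q b * qbrX (inverse (Q^b) * \<rho>) Q a (nat (b - p)) * qbr (inverse (Q^a) * inverse \<rho>) Q b
       = e^(a - 1 + b) * Pm fQ (Up 1 a + Up 1 b + (Up (p - b) a - {#0#}) + Up (- a - p) b)"
      unfolding CQ AX B1 Pm_union power_add by (simp add: ac_simps)
    also have "\<dots> = e^(a' + (b' - 1)) * Pm fQ (Up 1 a' + Up 1 b' + Up (p - b') a' + (Up (- a' - p) b' - {#0#}))"
    proof -
      have ex: "a - 1 + b = a' + (b' - 1)" using sum a1 b1 by linarith
      have m: "Pm fQ (Up 1 a + Up 1 b + (Up (p - b) a - {#0#}) + Up (- a - p) b) = Pm fQ (Up 1 a' + Up 1 b' + Up (p - b') a' + (Up (- a' - p) b' - {#0#}))"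
        by (simp only: Pm_abs[where f=fQ, OF odd, of "Up 1 a + Up 1 b + (Up (p - b) a - {#0#}) + Up (- a - p) b"]
           Pm_abs[where f=fQ, OF odd, of "Up 1 a' + Up 1 b' + Up (p - b') a' + (Up (- a' - p) b' - {#0#})"]
           Q_multiset_abs_eq[OF c1 a' b'] Q_parity[OF c1 a' b'])
      show ?thesis by (simp only: ex m)
    qed
    also have "\<dots> = qbr Q Q a' * qbr Q Q b' * qbr (inverse (Q^b') * \<rho>) Q a' * qbrX (inverse (Q^a') * inverse \<rho>) Q b' b"
      unfolding CQ A1 BX Pm_union power_add by (simp add: ac_simps)
    finally show ?thesis .
  qed
  show ?thesis unfolding g1_def g2_def \<rho>_def[symmetric] using N D by simp
qed


type_synonym 'n pt = "(complex^'n) \<times> (complex^'n)"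

definition piH :: "'n::finite \<Rightarrow> 'n \<Rightarrow> complex \<Rightarrow> 'n pt \<Rightarrow> 'n pt" where
  "piH i j \<rho> z = ((\<chi> m. if m = i then \<rho> * fst z $ j else fst z $ m), snd z)"

definition dl :: "'n::finite \<Rightarrow> 'n \<Rightarrow> complex \<Rightarrow> 'n pt \<Rightarrow> complex" where
  "dl i j \<rho> z = fst z $ i - \<rho> * fst z $ j"

definition dd :: "'n::finite pt \<Rightarrow> 'n \<Rightarrow> 'n \<Rightarrow> complex \<Rightarrow> ('n pt \<Rightarrow> complex) \<Rightarrow> bool" where
  "dd c i j \<rho> f \<longleftrightarrow> isCont f c \<and>
     (\<exists>D. isCont D c \<and> (\<forall>\<^sub>F z in nhds c. f z - f (piH i j \<rho> z) = dl i j \<rho> z * D z))"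

lemma isCont_piH: "isCont (piH i j \<rho>) c"
  unfolding piH_def isCont_def
  by (intro tendsto_intros) (auto intro!: tendsto_intros simp: vec_lambda_beta)

lemma piH_fst: "fst (piH i j \<rho> z) $ m = (if m = i then \<rho> * fst z $ j else fst z $ m)"
  by (simp add: piH_def)
lemma piH_snd: "snd (piH i j \<rho> z) = snd z" by (simp add: piH_def)

lemma inv_diff_eq: "(A::complex) \<noteq> 0 \<Longrightarrow> B \<noteq> 0 \<Longrightarrow> inverse A - inverse B = - (A - B) / (A * B)"
  by (simp add: field_simps)

context
  fixes c :: "'n::finite pt" and i j :: 'n and \<rho> :: complex
  assumes ij: "i \<noteq> j" and cH: "fst c $ i = \<rho> * fst c $ j"
begin

lemma piH_c: "piH i j \<rho> c = c"
  using cH by (cases c) (auto simp: piH_def vec_eq_iff)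

lemma isCont_comp_piH: "isCont f c \<Longrightarrow> isCont (\<lambda>z. f (piH i j \<rho> z)) c"
proof -
  assume "isCont f c"
  then have "isCont f (piH i j \<rho> c)" using piH_c by simp
  then show ?thesis using isCont_o2[OF isCont_piH] by blast
qed

lemma dd_isCont: "dd c i j \<rho> f \<Longrightarrow> isCont f c" by (simp add: dd_def)

lemma dd_const: "dd c i j \<rho> (\<lambda>z. k)"
  unfolding dd_def by (auto intro!: exI[of _ "\<lambda>z. 0"])

lemma dd_U: "dd c i j \<rho> (\<lambda>z. fst z $ m)"
  unfolding dd_def
proof (intro conjI exI)
  show "isCont (\<lambda>z. fst z $ m) c" by (intro continuous_intros)
  show "isCont (\<lambda>z. if m = i then 1 else 0) c" by simp
  show "\<forall>\<^sub>F z in nhds c. fst z $ m - fst (piH i j \<rho> z) $ m = dl i j \<rho> z * (if m = i then 1 else 0)"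
    by (simp add: piH_fst dl_def)
qed

lemma dd_V: "dd c i j \<rho> (\<lambda>z. snd z $ a)"
  unfolding dd_def
  by (auto intro!: exI[of _ "\<lambda>z. 0"] continuous_intros simp: piH_snd)

lemma dd_add: "dd c i j \<rho> f \<Longrightarrow> dd c i j \<rho> g \<Longrightarrow> dd c i j \<rho> (\<lambda>z. f z + g z)"
  unfolding dd_def
proof (elim conjE exE, intro conjI exI)
  fix Df Dg
  assume "isCont f c" "isCont g c" "isCont Df c" "isCont Dg c"
    and ef: "\<forall>\<^sub>F z in nhds c. f z - f (piH i j \<rho> z) = dl i j \<rho> z * Df z"
    and eg: "\<forall>\<^sub>F z in nhds c. g z - g (piH i j \<rho> z) = dl i j \<rho> z * Dg z"
  then show "isCont (\<lambda>z. f z + g z) c" "isCont (\<lambda>z. Df z + Dg z) c" by (auto intro: continuous_intros)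
  show "\<forall>\<^sub>F z in nhds c. f z + g z - (f (piH i j \<rho> z) + g (piH i j \<rho> z)) = dl i j \<rho> z * (Df z + Dg z)"
    using eventually_conj[OF ef eg] by eventually_elim (simp add: algebra_simps)
qed

lemma dd_minus: "dd c i j \<rho> f \<Longrightarrow> dd c i j \<rho> (\<lambda>z. - f z)"
  unfolding dd_def
proof (elim conjE exE, intro conjI exI)
  fix Df
  assume "isCont f c" "isCont Df c"
    and ef: "\<forall>\<^sub>F z in nhds c. f z - f (piH i j \<rho> z) = dl i j \<rho> z * Df z"
  then show "isCont (\<lambda>z. - f z) c" "isCont (\<lambda>z. - Df z) c" by (auto intro: continuous_intros)
  show "\<forall>\<^sub>F z in nhds c. - f z - - f (piH i j \<rho> z) = dl i j \<rho> z * - Df z"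
    using ef by eventually_elim (simp add: algebra_simps)
qed

lemma dd_diff: "dd c i j \<rho> f \<Longrightarrow> dd c i j \<rho> g \<Longrightarrow> dd c i j \<rho> (\<lambda>z. f z - g z)"
  using dd_add[of f "\<lambda>z. - g z"] dd_minus[of g] by simp

lemma dd_mult: "dd c i j \<rho> f \<Longrightarrow> dd c i j \<rho> g \<Longrightarrow> dd c i j \<rho> (\<lambda>z. f z * g z)"
  unfolding dd_def
proof (elim conjE exE, intro conjI exI)
  fix Df Dg
  assume cf: "isCont f c" and cg: "isCont g c" and "isCont Df c" "isCont Dg c"
    and ef: "\<forall>\<^sub>F z in nhds c. f z - f (piH i j \<rho> z) = dl i j \<rho> z * Df z"
    and eg: "\<forall>\<^sub>F z in nhds c. g z - g (piH i j \<rho> z) = dl i j \<rho> z * Dg z"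
  then show "isCont (\<lambda>z. f z * g z) c" "isCont (\<lambda>z. Df z * g z + f (piH i j \<rho> z) * Dg z) c"
    using isCont_comp_piH[OF cf] by (auto intro: continuous_intros)
  show "\<forall>\<^sub>F z in nhds c. f z * g z - f (piH i j \<rho> z) * g (piH i j \<rho> z) = dl i j \<rho> z * (Df z * g z + f (piH i j \<rho> z) * Dg z)"
    using eventually_conj[OF ef eg]
  proof eventually_elim
    case (elim z)
    have "f z * g z - f (piH i j \<rho> z) * g (piH i j \<rho> z)
        = (f z - f (piH i j \<rho> z)) * g z + f (piH i j \<rho> z) * (g z - g (piH i j \<rho> z))"
      by (simp add: algebra_simps)
    also have "\<dots> = dl i j \<rho> z * (Df z * g z + f (piH i j \<rho> z) * Dg z)"
      using elim by (simp add: algebra_simps)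
    finally show ?case .
  qed
qed

lemma dd_inverse: "dd c i j \<rho> f \<Longrightarrow> f c \<noteq> 0 \<Longrightarrow> dd c i j \<rho> (\<lambda>z. inverse (f z))"
  unfolding dd_def
proof (elim conjE exE, intro conjI exI)
  fix Df
  assume cf: "isCont f c" and "isCont Df c" and nz: "f c \<noteq> 0"
    and ef: "\<forall>\<^sub>F z in nhds c. f z - f (piH i j \<rho> z) = dl i j \<rho> z * Df z"
  have cfp: "isCont (\<lambda>z. f (piH i j \<rho> z)) c" by (rule isCont_comp_piH[OF cf])
  show "isCont (\<lambda>z. inverse (f z)) c" using cf nz by (auto intro: continuous_intros)
  show "isCont (\<lambda>z. - Df z / (f z * f (piH i j \<rho> z))) c"
    using cf cfp nz piH_c \<open>isCont Df c\<close> by (auto intro!: continuous_intros)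
  have e1: "\<forall>\<^sub>F z in nhds c. f z \<noteq> 0"
    using cf nz unfolding isCont_def eventually_nhds_conv_at by (simp add: tendsto_imp_eventually_ne)
  have e2: "\<forall>\<^sub>F z in nhds c. f (piH i j \<rho> z) \<noteq> 0"
    using cfp nz piH_c unfolding isCont_def eventually_nhds_conv_at by (metis tendsto_imp_eventually_ne)
  show "\<forall>\<^sub>F z in nhds c. inverse (f z) - inverse (f (piH i j \<rho> z)) = dl i j \<rho> z * (- Df z / (f z * f (piH i j \<rho> z)))"
    using eventually_conj[OF ef eventually_conj[OF e1 e2]]
  proof eventually_elim
    case (elim z)
    from elim have h1: "f z - f (piH i j \<rho> z) = dl i j \<rho> z * Df z" and h2: "f z \<noteq> 0"
      and h3: "f (piH i j \<rho> z) \<noteq> 0" by auto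
    have "inverse (f z) - inverse (f (piH i j \<rho> z)) = - (f z - f (piH i j \<rho> z)) / (f z * f (piH i j \<rho> z))"
      by (rule inv_diff_eq[OF h2 h3])
    also have "\<dots> = - (dl i j \<rho> z * Df z) / (f z * f (piH i j \<rho> z))" by (simp only: h1)
    finally show ?case by simp
  qed
qed

lemma dd_divide: "dd c i j \<rho> f \<Longrightarrow> dd c i j \<rho> g \<Longrightarrow> g c \<noteq> 0 \<Longrightarrow> dd c i j \<rho> (\<lambda>z. f z / g z)"
  using dd_mult[OF _ dd_inverse, of f g] by (simp add: divide_inverse)

lemma dd_prod: "finite A \<Longrightarrow> (\<And>a. a \<in> A \<Longrightarrow> dd c i j \<rho> (f a)) \<Longrightarrow> dd c i j \<rho> (\<lambda>z. \<Prod>a\<in>A. f a z)"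
  by (induction A rule: finite_induct) (auto intro: dd_const dd_mult)

lemma dd_sum: "finite A \<Longrightarrow> (\<And>a. a \<in> A \<Longrightarrow> dd c i j \<rho> (f a)) \<Longrightarrow> dd c i j \<rho> (\<lambda>z. \<Sum>a\<in>A. f a z)"
  by (induction A rule: finite_induct) (auto intro: dd_const dd_add)

lemma dd_ph: "dd c i j \<rho> f \<Longrightarrow> f c \<noteq> 0 \<Longrightarrow> dd c i j \<rho> (\<lambda>z. ph (f z))"
  unfolding ph_def by (intro dd_diff dd_inverse)

lemma dd_qbr: "dd c i j \<rho> f \<Longrightarrow> f c \<noteq> 0 \<Longrightarrow> Q \<noteq> 0 \<Longrightarrow> dd c i j \<rho> (\<lambda>z. qbr (f z) Q m)"
  unfolding qbr_ph by (intro dd_prod dd_ph dd_mult dd_const) auto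

lemma dd_limit:
  assumes "dd c i j \<rho> h" and "\<forall>\<^sub>F z in nhds c. h (piH i j \<rho> z) = 0"
  shows "\<exists>D. isCont D c \<and> (\<forall>\<^sub>F z in nhds c. h z = dl i j \<rho> z * D z)"
proof -
  obtain D where "isCont D c" and e: "\<forall>\<^sub>F z in nhds c. h z - h (piH i j \<rho> z) = dl i j \<rho> z * D z"
    using assms(1) unfolding dd_def by blast
  moreover have "\<forall>\<^sub>F z in nhds c. h z = dl i j \<rho> z * D z"
    using eventually_conj[OF e assms(2)] by eventually_elim (metis diff_zero)
  ultimately show ?thesis by blast
qed

end


lemma qbr_add: "qbr w Q (m + n) = qbr w Q m * qbr (Q^m * w) Q n"
proof (induction n)
  case 0 then show ?case by (simp add: qbr_def)
next
  case (Suc n)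
  have "qbr w Q (m + Suc n) = qbr w Q (m + n) * ph (Q^(m+n) * w)"
    by (simp add: qbr_ph)
  also have "\<dots> = qbr w Q m * (qbr (Q^m * w) Q n * ph (Q^n * (Q^m * w)))"
    using Suc by (simp add: power_add ac_simps)
  also have "qbr (Q^m * w) Q n * ph (Q^n * (Q^m * w)) = qbr (Q^m * w) Q (Suc n)"
    by (simp add: qbr_ph)
  finally show ?case .
qed

lemma qbr_sgn: "e = 1 \<or> e = -1 \<Longrightarrow> qbr (e * y) Q n = e^n * qbr y Q n"
  unfolding qbr_ph
proof -
  assume e: "e = 1 \<or> e = -1"
  have "(\<Prod>l<n. ph (Q ^ l * (e * y))) = (\<Prod>l<n. e * ph (Q ^ l * y))"
    using ph_sgn[OF e] by (intro prod.cong refl) (metis mult.left_commute)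
  then show "(\<Prod>l<n. ph (Q ^ l * (e * y))) = e ^ n * (\<Prod>l<n. ph (Q ^ l * y))"
    by (simp add: prod.distrib)
qed

lemma pairB:
  fixes Q e y :: complex and a b a' b' :: nat and p :: int
  assumes Q: "Q \<noteq> 0" and e: "e = 1 \<or> e = -1" and a': "int a' = b - p" and b': "int b' = a + p"
  shows "e^a' * (qbr (e * Q powi p * y) Q a * qbr y Q b) = e^a * (qbr (e * Q powi p * y) Q a' * qbr y Q b')"
proof (cases "p \<ge> 0")
  case True
  define P where "P = nat p"
  have pP: "p = int P" using True P_def by simp
  have bb: "b = P + a'" and bb': "b' = P + a" using a' b' pP by linarith+
  have r: "e * Q powi p * y = e * (Q^P * y)" using pP by simp
  show ?thesis unfolding r bb bb' qbr_add qbr_sgn[OF e] by (simp add: ac_simps)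
next
  case False
  define P where "P = nat (-p)"
  have pP: "p = - int P" using False P_def by simp
  have aa: "a = P + b'" and aa': "a' = P + b" using a' b' pP by linarith+
  define w where "w = inverse (Q^P) * y"
  have r: "e * Q powi p * y = e * w" using pP by (simp add: w_def power_int_minus)
  have w: "Q^P * w = y" using Q by (simp add: w_def)
  show ?thesis unfolding r qbr_sgn[OF e] unfolding aa aa' qbr_add w by (simp add: ac_simps power_add)
qed

lemma pair_ratio:
  fixes Q e y y' :: complex and a b a' b' :: nat and p :: int
  assumes Q: "Q \<noteq> 0" and e: "e = 1 \<or> e = -1" and a': "int a' = b - p" and b': "int b' = a + p"
  shows "qbr (e * Q powi p * y) Q a / qbr (e * Q powi p * y') Q a * (qbr y Q b / qbr y' Q b)
       = qbr (e * Q powi p * y) Q a' / qbr (e * Q powi p * y') Q a' * (qbr y Q b' / qbr y' Q b')"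
proof -
  have ne: "(e::complex)^n \<noteq> 0" for n using e by auto
  have 1: "qbr (e * Q powi p * y) Q a * qbr y Q b = (e^a / e^a') * (qbr (e * Q powi p * y) Q a' * qbr y Q b')"
    using pairB[OF Q e a' b', of y] ne[of a'] by (simp add: field_simps)
  have 2: "qbr (e * Q powi p * y') Q a * qbr y' Q b = (e^a / e^a') * (qbr (e * Q powi p * y') Q a' * qbr y' Q b')"
    using pairB[OF Q e a' b', of y'] ne[of a'] by (simp add: field_simps)
  have "qbr (e * Q powi p * y) Q a / qbr (e * Q powi p * y') Q a * (qbr y Q b / qbr y' Q b)
      = (qbr (e * Q powi p * y) Q a * qbr y Q b) / (qbr (e * Q powi p * y') Q a * qbr y' Q b)" by simp
  also have "\<dots> = ((e^a / e^a') * (qbr (e * Q powi p * y) Q a' * qbr y Q b')) / ((e^a / e^a') * (qbr (e * Q powi p * y') Q a' * qbr y' Q b'))"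
    by (simp only: 1 2)
  also have "\<dots> = (qbr (e * Q powi p * y) Q a' * qbr y Q b') / (qbr (e * Q powi p * y') Q a' * qbr y' Q b')"
    by (rule mult_divide_mult_cancel_left) (use ne[of a] ne[of a'] in simp)
  finally show ?thesis by simp
qed


definition Cf :: "complex \<Rightarrow> complex \<Rightarrow> nat \<Rightarrow> complex" where
  "Cf T Q n = qbr (Q * T) Q n / qbr Q Q n"
definition Rf :: "complex \<Rightarrow> complex \<Rightarrow> ('n::finite \<Rightarrow> nat) \<Rightarrow> complex^'n \<Rightarrow> 'n \<Rightarrow> 'n \<Rightarrow> complex" where
  "Rf T Q k U m m' = qbr (inverse T * inverse (Q ^ k m') * U$m / U$m') Q (k m) /
        qbr (inverse (Q ^ k m') * U$m / U$m') Q (k m)"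
definition Sf :: "complex \<Rightarrow> complex \<Rightarrow> ('n::finite \<Rightarrow> nat) \<Rightarrow> complex^'n \<Rightarrow> complex^'n \<Rightarrow> 'n \<Rightarrow> 'n \<Rightarrow> complex" where
  "Sf T Q k U V a m = qbr (T * U$m / V$a) Q (k m) / qbr (U$m / V$a) Q (k m)"

lemma Xk_alt: "Xk T Q k U V = (\<Prod>m\<in>UNIV. Cf T Q (k m)) * (\<Prod>m\<in>UNIV. \<Prod>m'\<in>UNIV - {m}. Rf T Q k U m m')
   * (\<Prod>a\<in>UNIV. \<Prod>m\<in>UNIV. Sf T Q k U V a m)"
  by (simp add: Xk_def Cf_def Rf_def Sf_def)

definition Ek :: "complex \<Rightarrow> complex \<Rightarrow> ('n::finite \<Rightarrow> nat) \<Rightarrow> 'n \<Rightarrow> 'n \<Rightarrow> complex^'n \<Rightarrow> complex^'n \<Rightarrow> complex" where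
  "Ek T Q k i j U V =
     (\<Prod>m\<in>UNIV - {i, j}. Cf T Q (k m)) *
     (\<Prod>m\<in>UNIV - {i, j}. Rf T Q k U i m * Rf T Q k U j m * Rf T Q k U m i * Rf T Q k U m j) *
     (\<Prod>m\<in>UNIV - {i, j}. \<Prod>m'\<in>UNIV - {i, j} - {m}. Rf T Q k U m m') *
     (\<Prod>a\<in>UNIV. Sf T Q k U V a i * Sf T Q k U V a j * (\<Prod>m\<in>UNIV - {i, j}. Sf T Q k U V a m))"

lemma prod_ij:
  fixes f :: "'n::finite \<Rightarrow> complex"
  assumes "i \<noteq> j" shows "(\<Prod>m\<in>UNIV. f m) = f i * f j * (\<Prod>m\<in>UNIV - {i, j}. f m)"
proof -
  have "UNIV = insert i (insert j (UNIV - {i, j}))" by auto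
  then have "(\<Prod>m\<in>UNIV. f m) = (\<Prod>m\<in>insert i (insert j (UNIV - {i, j})). f m)" by simp
  also have "\<dots> = f i * f j * (\<Prod>m\<in>UNIV - {i, j}. f m)" using assms by (simp add: mult.assoc)
  finally show ?thesis .
qed

lemma prod_minus_i:
  fixes f :: "'n::finite \<Rightarrow> complex"
  assumes "i \<noteq> j" shows "(\<Prod>m\<in>UNIV - {i}. f m) = f j * (\<Prod>m\<in>UNIV - {i, j}. f m)"
proof -
  have "UNIV - {i} = insert j (UNIV - {i, j})" using assms by auto
  then show ?thesis by simp
qed

lemma prod_minus_m:
  fixes f :: "'n::finite \<Rightarrow> complex"
  assumes "m \<in> UNIV - {i, j}" "i \<noteq> j"
  shows "(\<Prod>m'\<in>UNIV - {m}. f m') = f i * f j * (\<Prod>m'\<in>UNIV - {i, j} - {m}. f m')"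
proof -
  have "UNIV - {m} = insert i (insert j (UNIV - {i, j} - {m}))" using assms by auto
  then show ?thesis using assms by (simp add: mult.assoc)
qed

lemma Xk_decomp:
  fixes k :: "'n::finite \<Rightarrow> nat"
  assumes ij: "i \<noteq> j"
  shows "Xk T Q k U V = Ek T Q k i j U V * (Cf T Q (k i) * Cf T Q (k j) * Rf T Q k U i j * Rf T Q k U j i)"
proof -
  let ?O = "UNIV - {i, j}"
  let ?R = "Rf T Q k U"
  have A1: "(\<Prod>m\<in>UNIV. Cf T Q (k m)) = Cf T Q (k i) * Cf T Q (k j) * (\<Prod>m\<in>?O. Cf T Q (k m))"
    by (rule prod_ij[OF ij])
  have A2: "(\<Prod>m\<in>UNIV. \<Prod>m'\<in>UNIV - {m}. ?R m m') =
      ?R i j * ?R j i * (\<Prod>m\<in>?O. ?R i m * ?R j m * ?R m i * ?R m j) * (\<Prod>m\<in>?O. \<Prod>m'\<in>?O - {m}. ?R m m')"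
  proof -
    have "(\<Prod>m\<in>UNIV. \<Prod>m'\<in>UNIV - {m}. ?R m m') =
        (\<Prod>m'\<in>UNIV - {i}. ?R i m') * (\<Prod>m'\<in>UNIV - {j}. ?R j m') * (\<Prod>m\<in>?O. \<Prod>m'\<in>UNIV - {m}. ?R m m')"
      by (rule prod_ij[OF ij])
    also have "(\<Prod>m'\<in>UNIV - {i}. ?R i m') = ?R i j * (\<Prod>m\<in>?O. ?R i m)"
      by (rule prod_minus_i[OF ij])
    also have "(\<Prod>m'\<in>UNIV - {j}. ?R j m') = ?R j i * (\<Prod>m\<in>?O. ?R j m)"
      using prod_minus_i[of j i] ij by (simp add: insert_commute)
    also have "(\<Prod>m\<in>?O. \<Prod>m'\<in>UNIV - {m}. ?R m m') = (\<Prod>m\<in>?O. ?R m i * ?R m j * (\<Prod>m'\<in>?O - {m}. ?R m m'))"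
      by (rule prod.cong[OF refl], rule prod_minus_m[OF _ ij])
    also have "\<dots> = (\<Prod>m\<in>?O. ?R m i * ?R m j) * (\<Prod>m\<in>?O. \<Prod>m'\<in>?O - {m}. ?R m m')"
      by (simp add: prod.distrib)
    finally show ?thesis by (simp add: prod.distrib ac_simps)
  qed
  have A3: "(\<Prod>a\<in>UNIV. \<Prod>m\<in>UNIV. Sf T Q k U V a m) = (\<Prod>a\<in>UNIV. Sf T Q k U V a i * Sf T Q k U V a j * (\<Prod>m\<in>?O. Sf T Q k U V a m))"
    by (rule prod.cong[OF refl], rule prod_ij[OF ij])
  show ?thesis unfolding Xk_alt A1 A2 A3 Ek_def by (simp add: ac_simps)
qed

definition coreF :: "complex \<Rightarrow> complex \<Rightarrow> nat \<Rightarrow> nat \<Rightarrow> complex \<Rightarrow> complex" where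
  "coreF T Q a b x = Cf T Q a * Cf T Q b *
     (qbr (inverse T * inverse (Q^b) * x) Q a / qbr (inverse (Q^b) * x) Q a) *
     (qbr (inverse T * inverse (Q^a) * inverse x) Q b / qbr (inverse (Q^a) * inverse x) Q b)"

lemma core_eq: "Cf T Q (k i) * Cf T Q (k j) * Rf T Q k U i j * Rf T Q k U j i = coreF T Q (k i) (k j) (U$i / U$j)"
  unfolding coreF_def Rf_def by (simp add: times_divide_eq_right inverse_divide)

lemma coreF_g1: "l0 < a \<Longrightarrow> coreF T Q a b x = g1 T Q a b x l0 / ph (Q^l0 * (inverse (Q^b) * x))"
  unfolding coreF_def g1_def Cf_def qbr_split[of l0 a "inverse (Q^b) * x" Q] by (simp add: ac_simps)

lemma coreF_g2: "l0 < b \<Longrightarrow> coreF T Q a b x = g2 T Q a b x l0 / ph (Q^l0 * (inverse (Q^a) * inverse x))"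
  unfolding coreF_def g2_def Cf_def qbr_split[of l0 b "inverse (Q^a) * inverse x" Q] by (simp add: ac_simps)


lemma shift_inv:
  fixes Q e X Y :: complex and a b' :: nat and p :: int
  assumes Q: "Q \<noteq> 0" and e: "e = 1 \<or> e = -1" and b': "int b' = a + p"
  shows "inverse (Q^a) * X / (e * Q powi p * Y) = e * (inverse (Q^b') * X / Y)"
proof -
  have "Q^b' = Q powi (int a + p)" using b' by (metis power_int_of_nat)
  also have "\<dots> = Q^a * Q powi p" using Q by (simp add: power_int_add)
  finally have qb: "Q^b' = Q^a * Q powi p" .
  show ?thesis unfolding qb
    using e Q by (elim disjE) (simp_all add: divide_inverse ac_simps)
qed

lemma cancel_lem: "(c::complex) \<noteq> 0 \<Longrightarrow> (c * a) / (c * b) * d = a / b * d"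
  by simp

lemma Ek_sigma:
  fixes k :: "'n::finite \<Rightarrow> nat" and U V :: "complex^'n" and p :: int and e :: complex
  assumes ij: "i \<noteq> j" and Q: "Q \<noteq> 0" and e: "e = 1 \<or> e = -1"
    and Ui: "U$i = e * Q powi p * U$j" and Uj: "U$j \<noteq> 0"
    and a': "int a' = int (k j) - p" and b': "int b' = int (k i) + p"
  shows "Ek T Q k i j U V = Ek T Q (k(i := a', j := b')) i j U V"
proof -
  define k' where "k' = k(i := a', j := b')"
  let ?O = "UNIV - {i, j}"
  have k'i: "k' i = a'" and k'j: "k' j = b'" using ij by (auto simp: k'_def)
  have k'm: "m \<in> ?O \<Longrightarrow> k' m = k m" for m by (auto simp: k'_def)
  have G1: "(\<Prod>m\<in>?O. Cf T Q (k m)) = (\<Prod>m\<in>?O. Cf T Q (k' m))"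
    by (rule prod.cong[OF refl]) (simp add: k'm)
  have G3: "(\<Prod>m\<in>?O. \<Prod>m'\<in>?O - {m}. Rf T Q k U m m') = (\<Prod>m\<in>?O. \<Prod>m'\<in>?O - {m}. Rf T Q k' U m m')"
    by (intro prod.cong refl) (simp add: Rf_def k'm)
  have G2: "(\<Prod>m\<in>?O. Rf T Q k U i m * Rf T Q k U j m * Rf T Q k U m i * Rf T Q k U m j) =
            (\<Prod>m\<in>?O. Rf T Q k' U i m * Rf T Q k' U j m * Rf T Q k' U m i * Rf T Q k' U m j)"
  proof (rule prod.cong[OF refl])
    fix m assume m: "m \<in> ?O"
    define y where "y = inverse T * inverse (Q ^ k m) * U$j / U$m"
    define y' where "y' = inverse (Q ^ k m) * U$j / U$m"
    have r1: "Rf T Q k U i m * Rf T Q k U j m = qbr (e * Q powi p * y) Q (k i) / qbr (e * Q powi p * y') Q (k i) * (qbr y Q (k j) / qbr y' Q (k j))"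
      unfolding Rf_def y_def y'_def Ui by (simp add: ac_simps)
    have r1': "Rf T Q k' U i m * Rf T Q k' U j m = qbr (e * Q powi p * y) Q a' / qbr (e * Q powi p * y') Q a' * (qbr y Q b' / qbr y' Q b')"
      unfolding Rf_def y_def y'_def Ui k'i k'j k'm[OF m] by (simp add: ac_simps)
    have P1: "Rf T Q k U i m * Rf T Q k U j m = Rf T Q k' U i m * Rf T Q k' U j m"
      unfolding r1 r1' using pair_ratio[OF Q e a' b'] by simp
    define Y1 where "Y1 = inverse (Q ^ b') * U$m / U$j"
    define Y2 where "Y2 = inverse (Q ^ k j) * U$m / U$j"
    have s1: "inverse (Q ^ k i) * U$m / U$i = e * Y1"
      unfolding Y1_def Ui by (rule shift_inv[OF Q e b'])
    have s1T: "inverse T * inverse (Q ^ k i) * U$m / U$i = e * (inverse T * Y1)"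
    proof -
      have "inverse T * inverse (Q ^ k i) * U$m / U$i = inverse T * (inverse (Q ^ k i) * U$m / U$i)" by (simp add: mult.assoc)
      also have "\<dots> = inverse T * (e * Y1)" by (simp only: s1)
      finally show ?thesis by (simp add: ac_simps)
    qed
    have a'': "int (k j) = int a' + p" using a' by simp
    have s2: "inverse (Q ^ a') * U$m / U$i = e * Y2"
      unfolding Y2_def Ui by (rule shift_inv[OF Q e a''])
    have s2T: "inverse T * inverse (Q ^ a') * U$m / U$i = e * (inverse T * Y2)"
    proof -
      have "inverse T * inverse (Q ^ a') * U$m / U$i = inverse T * (inverse (Q ^ a') * U$m / U$i)" by (simp add: mult.assoc)
      also have "\<dots> = inverse T * (e * Y2)" by (simp only: s2)
      finally show ?thesis by (simp add: ac_simps)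
    qed
    have ne: "e ^ n \<noteq> 0" for n using e by auto
    have "Rf T Q k U m i * Rf T Q k U m j = (e^(k m) * qbr (inverse T * Y1) Q (k m)) / (e^(k m) * qbr Y1 Q (k m)) * (qbr (inverse T * Y2) Q (k m) / qbr Y2 Q (k m))"
      unfolding Rf_def s1 s1T qbr_sgn[OF e] unfolding Y2_def
      by (simp add: mult.assoc)
    also have "\<dots> = qbr (inverse T * Y1) Q (k m) / qbr Y1 Q (k m) * (qbr (inverse T * Y2) Q (k m) / qbr Y2 Q (k m))"
      by (rule cancel_lem[OF ne])
    finally have r2: "Rf T Q k U m i * Rf T Q k U m j = qbr (inverse T * Y1) Q (k m) / qbr Y1 Q (k m) * (qbr (inverse T * Y2) Q (k m) / qbr Y2 Q (k m))" .
    have "Rf T Q k' U m i * Rf T Q k' U m j = (e^(k m) * qbr (inverse T * Y2) Q (k m)) / (e^(k m) * qbr Y2 Q (k m)) * (qbr (inverse T * Y1) Q (k m) / qbr Y1 Q (k m))"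
      unfolding Rf_def k'i k'j k'm[OF m] s2 s2T qbr_sgn[OF e] unfolding Y1_def
      by (simp add: mult.assoc)
    also have "\<dots> = qbr (inverse T * Y2) Q (k m) / qbr Y2 Q (k m) * (qbr (inverse T * Y1) Q (k m) / qbr Y1 Q (k m))"
      by (rule cancel_lem[OF ne])
    finally have r2': "Rf T Q k' U m i * Rf T Q k' U m j = qbr (inverse T * Y2) Q (k m) / qbr Y2 Q (k m) * (qbr (inverse T * Y1) Q (k m) / qbr Y1 Q (k m))" .
    have P2: "Rf T Q k U m i * Rf T Q k U m j = Rf T Q k' U m i * Rf T Q k' U m j"
      unfolding r2 r2' by (simp add: mult.commute)
    show "Rf T Q k U i m * Rf T Q k U j m * Rf T Q k U m i * Rf T Q k U m j =
          Rf T Q k' U i m * Rf T Q k' U j m * Rf T Q k' U m i * Rf T Q k' U m j"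
      using P1 P2 by (metis mult.assoc)
  qed
  have G4: "(\<Prod>a\<in>UNIV. Sf T Q k U V a i * Sf T Q k U V a j * (\<Prod>m\<in>?O. Sf T Q k U V a m)) =
            (\<Prod>a\<in>UNIV. Sf T Q k' U V a i * Sf T Q k' U V a j * (\<Prod>m\<in>?O. Sf T Q k' U V a m))"
  proof (rule prod.cong[OF refl])
    fix a
    have O: "(\<Prod>m\<in>?O. Sf T Q k U V a m) = (\<Prod>m\<in>?O. Sf T Q k' U V a m)"
      by (rule prod.cong[OF refl]) (simp add: Sf_def k'm)
    define y where "y = T * U$j / V$a"
    define y' where "y' = U$j / V$a"
    have r1: "Sf T Q k U V a i * Sf T Q k U V a j = qbr (e * Q powi p * y) Q (k i) / qbr (e * Q powi p * y') Q (k i) * (qbr y Q (k j) / qbr y' Q (k j))"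
      unfolding Sf_def y_def y'_def Ui by (simp add: ac_simps)
    have r1': "Sf T Q k' U V a i * Sf T Q k' U V a j = qbr (e * Q powi p * y) Q a' / qbr (e * Q powi p * y') Q a' * (qbr y Q b' / qbr y' Q b')"
      unfolding Sf_def y_def y'_def Ui k'i k'j by (simp add: ac_simps)
    show "Sf T Q k U V a i * Sf T Q k U V a j * (\<Prod>m\<in>?O. Sf T Q k U V a m) =
          Sf T Q k' U V a i * Sf T Q k' U V a j * (\<Prod>m\<in>?O. Sf T Q k' U V a m)"
      unfolding O r1 r1' using pair_ratio[OF Q e a' b'] by simp
  qed
  have "Ek T Q k i j U V = Ek T Q k' i j U V"
    unfolding Ek_def by (subst G1, subst G2, subst G3, subst G4, rule refl)
  then show ?thesis unfolding k'_def .
qed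


lemma Q2_powi_1:
  fixes Q :: complex
  assumes Q: "Q \<noteq> 0" and Qg: "\<forall>m::nat. m > 0 \<longrightarrow> (Q^2)^m \<noteq> 1" and h: "(Q^2) powi r = 1"
  shows "r = 0"
proof (rule ccontr)
  assume r: "r \<noteq> 0"
  show False
  proof (cases "r > 0")
    case True
    define n where "n = nat r"
    have rr: "r = int n" and pos: "n > 0" using True by (auto simp: n_def)
    have "(Q^2) powi r = (Q^2)^n" unfolding rr by simp
    then show False using h Qg pos by auto
  next
    case False
    define n where "n = nat (-r)"
    have rr: "r = - int n" and pos: "n > 0" using r False by (auto simp: n_def)
    have "(Q^2) powi r = inverse ((Q^2)^n)"
      unfolding rr by (simp add: power_int_minus)
    then have "(Q^2)^n = 1" using h by (metis inverse_1 inverse_inverse_eq)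
    then show False using Qg pos by auto
  qed
qed

lemma ph_zero_iff: "y \<noteq> 0 \<Longrightarrow> ph y = 0 \<longleftrightarrow> y^2 = 1"
  unfolding ph_def by (auto simp: power2_eq_square field_simps)

lemma ph_Qpowi_nz:
  fixes Q :: complex
  assumes Q: "Q \<noteq> 0" and Qg: "\<forall>m::nat. m > 0 \<longrightarrow> (Q^2)^m \<noteq> 1" and r: "r \<noteq> 0"
  shows "ph (Q powi r) \<noteq> 0"
proof
  assume "ph (Q powi r) = 0"
  then have "(Q powi r)^2 = 1" using Q by (simp add: ph_zero_iff)
  then have "(Q^2) powi r = 1" using Q by (simp add: power_int_mult_distrib power2_eq_square)
  then show False using Q2_powi_1[OF Q Qg] r by blast
qed

lemma ph_sgn_nz: "e = 1 \<or> e = -1 \<Longrightarrow> ph y \<noteq> 0 \<Longrightarrow> ph (e * y) \<noteq> 0"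
  using ph_sgn[of e y] by auto

lemma nzA:
  fixes Q e :: complex
  assumes Q: "Q \<noteq> 0" and Qg: "\<forall>m::nat. m > 0 \<longrightarrow> (Q^2)^m \<noteq> 1" and e: "e = 1 \<or> e = -1"
    and r: "p - int b + int l \<noteq> 0"
  shows "ph (Q^l * (inverse (Q^b) * (e * Q powi p))) \<noteq> 0"
proof -
  have "Q^l * (inverse (Q^b) * (e * Q powi p)) = e * (Q^l * inverse (Q^b) * Q powi p)" by (simp add: ac_simps)
  also have "\<dots> = e * Q powi (p - int b + int l)" by (simp only: powi_combine[OF Q])
  finally have eq: "Q^l * (inverse (Q^b) * (e * Q powi p)) = e * Q powi (p - int b + int l)" .
  show ?thesis unfolding eq by (rule ph_sgn_nz[OF e ph_Qpowi_nz[OF Q Qg r]])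
qed

lemma nzB:
  fixes Q e :: complex
  assumes Q: "Q \<noteq> 0" and Qg: "\<forall>m::nat. m > 0 \<longrightarrow> (Q^2)^m \<noteq> 1" and e: "e = 1 \<or> e = -1"
    and r: "- int a - p + int l \<noteq> 0"
  shows "ph (Q^l * (inverse (Q^a) * inverse (e * Q powi p))) \<noteq> 0"
proof -
  have "Q^l * (inverse (Q^a) * inverse (e * Q powi p)) = e * (Q^l * inverse (Q^a) * Q powi (-p))"
    using eps_cases[OF e] by (simp add: ac_simps power_int_minus)
  also have "\<dots> = e * Q powi (- int a - p + int l)" by (simp only: powi_combine2[OF Q])
  finally have eq: "Q^l * (inverse (Q^a) * inverse (e * Q powi p)) = e * Q powi (- int a - p + int l)" .
  show ?thesis unfolding eq by (rule ph_sgn_nz[OF e ph_Qpowi_nz[OF Q Qg r]])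
qed

lemma ph_ratio_nz:
  fixes Q A B :: complex
  assumes Q: "Q \<noteq> 0" and A: "A \<noteq> 0" and B: "B \<noteq> 0"
    and h: "A^2 \<noteq> (Q^2) powi (int k - int l) * B^2"
  shows "ph (Q^l * (inverse (Q^k) * A / B)) \<noteq> 0"
proof
  assume z: "ph (Q^l * (inverse (Q^k) * A / B)) = 0"
  have nz: "Q^l * (inverse (Q^k) * A / B) \<noteq> 0" using Q A B by simp
  have "(Q^l * (inverse (Q^k) * A / B))^2 = 1" using z nz by (simp add: ph_zero_iff)
  then have "(Q^2)^l * A^2 = (Q^2)^k * B^2" using Q B
    by (simp add: power_mult_distrib field_simps power_inverse flip: power_mult)
  then have "A^2 = (Q^2)^k / (Q^2)^l * B^2" using Q by (simp add: field_simps)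
  also have "(Q^2)^k / (Q^2)^l = (Q^2) powi (int k - int l)" using Q by (simp add: power_int_diff)
  finally show False using h by simp
qed

lemma qbr_nz: "(\<And>l. l < n \<Longrightarrow> ph (Q^l * w) \<noteq> 0) \<Longrightarrow> qbr w Q n \<noteq> 0"
  unfolding qbr_ph by (simp add: prod_zero_iff)

lemma qbrX_nz: "(\<And>l. l < n \<Longrightarrow> l \<noteq> l0 \<Longrightarrow> ph (Q^l * w) \<noteq> 0) \<Longrightarrow> qbrX w Q n l0 \<noteq> 0"
  unfolding qbrX_def by (simp add: prod_zero_iff)

lemma qbrQQ_nz:
  fixes Q :: complex
  assumes Q: "Q \<noteq> 0" and Qg: "\<forall>m::nat. m > 0 \<longrightarrow> (Q^2)^m \<noteq> 1"
  shows "qbr Q Q n \<noteq> 0"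
proof (rule qbr_nz)
  fix l
  have "Q^l * Q = Q powi (int l + 1)" using Q by (simp add: power_int_add)
  then show "ph (Q^l * Q) \<noteq> 0" using ph_Qpowi_nz[OF Q Qg, of "int l + 1"] by simp
qed


lemma qbr_ratio_nz:
  fixes Q A B :: complex
  assumes Q: "Q \<noteq> 0" and A: "A \<noteq> 0" and B: "B \<noteq> 0" and g: "\<forall>s::int. A^2 \<noteq> (Q^2) powi s * B^2"
  shows "qbr (inverse (Q^k) * A / B) Q n \<noteq> 0"
  by (rule qbr_nz, rule ph_ratio_nz[OF Q A B]) (use g in blast)

lemma qbr_ratio_nz0:
  fixes Q A B :: complex
  assumes Q: "Q \<noteq> 0" and A: "A \<noteq> 0" and B: "B \<noteq> 0" and g: "\<forall>s::int. A^2 \<noteq> (Q^2) powi s * B^2"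
  shows "qbr (A / B) Q n \<noteq> 0"
  using qbr_ratio_nz[OF Q A B g, of 0] by simp

context
  fixes c :: "'n::finite pt" and i j :: 'n and \<rho> T Q :: complex
  assumes ij: "i \<noteq> j" and cH: "fst c $ i = \<rho> * fst c $ j"
    and T: "T \<noteq> 0" and Q: "Q \<noteq> 0"
    and hU: "\<forall>m. fst c $ m \<noteq> 0" and hV: "\<forall>a. snd c $ a \<noteq> 0"
begin

lemmas ddM = dd_mult[OF ij cH] and ddD = dd_divide[OF ij cH] and ddC = dd_const[OF ij cH]
  and ddU = dd_U[OF ij cH] and ddV = dd_V[OF ij cH] and ddQ = dd_qbr[OF ij cH]
  and ddP = dd_prod[OF ij cH]

lemma dd_arg: "dd c i j \<rho> (\<lambda>z. K * fst z $ m / fst z $ m')"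
  by (intro ddD ddM ddC ddU) (use hU in auto)

lemma dd_argV: "dd c i j \<rho> (\<lambda>z. K * fst z $ m / snd z $ a)"
  by (intro ddD ddM ddC ddU ddV) (use hV in auto)

lemma Rf_dd:
  assumes "qbr (inverse (Q ^ k m') * fst c $ m / fst c $ m') Q (k m) \<noteq> 0"
  shows "dd c i j \<rho> (\<lambda>z. Rf T Q k (fst z) m m')"
proof -
  have a1: "dd c i j \<rho> (\<lambda>z. inverse T * inverse (Q ^ k m') * fst z $ m / fst z $ m')" by (rule dd_arg)
  have a2: "dd c i j \<rho> (\<lambda>z. inverse (Q ^ k m') * fst z $ m / fst z $ m')" by (rule dd_arg)
  show ?thesis unfolding Rf_def
    by (rule ddD[OF ddQ[OF a1] ddQ[OF a2]]) (use T Q hU assms in auto)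
qed

lemma Sf_dd:
  assumes "qbr (fst c $ m / snd c $ a) Q (k m) \<noteq> 0"
  shows "dd c i j \<rho> (\<lambda>z. Sf T Q k (fst z) (snd z) a m)"
proof -
  have a1: "dd c i j \<rho> (\<lambda>z. T * fst z $ m / snd z $ a)" by (rule dd_argV)
  have a2: "dd c i j \<rho> (\<lambda>z. fst z $ m / snd z $ a)" using dd_argV[of 1] by simp
  show ?thesis unfolding Sf_def
    by (rule ddD[OF ddQ[OF a1] ddQ[OF a2]]) (use T Q hU hV assms in auto)
qed

lemma Ek_dd:
  assumes R: "\<And>m m'. m \<noteq> m' \<Longrightarrow> {m, m'} \<noteq> {i, j} \<Longrightarrow> qbr (inverse (Q ^ k m') * fst c $ m / fst c $ m') Q (k m) \<noteq> 0"
    and S: "\<And>a m. qbr (fst c $ m / snd c $ a) Q (k m) \<noteq> 0"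
  shows "dd c i j \<rho> (\<lambda>z. Ek T Q k i j (fst z) (snd z))"
proof -
  have Rd: "dd c i j \<rho> (\<lambda>z. Rf T Q k (fst z) m m')" if "m \<noteq> m'" "{m, m'} \<noteq> {i, j}" for m m'
    by (rule Rf_dd[OF R[OF that]])
  have Sd: "dd c i j \<rho> (\<lambda>z. Sf T Q k (fst z) (snd z) a m)" for a m
    by (rule Sf_dd[OF S])
  show ?thesis unfolding Ek_def
    apply (intro ddM ddP ddC Sd)
    apply (auto intro!: Rd)
    done
qed

lemma Xk_dd:
  assumes R: "\<And>m m'. m \<noteq> m' \<Longrightarrow> qbr (inverse (Q ^ k m') * fst c $ m / fst c $ m') Q (k m) \<noteq> 0"
    and S: "\<And>a m. qbr (fst c $ m / snd c $ a) Q (k m) \<noteq> 0"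
  shows "dd c i j \<rho> (\<lambda>z. Xk T Q k (fst z) (snd z))"
proof -
  have Rd: "dd c i j \<rho> (\<lambda>z. Rf T Q k (fst z) m m')" if "m \<noteq> m'" for m m'
    by (rule Rf_dd[OF R[OF that]])
  have Sd: "dd c i j \<rho> (\<lambda>z. Sf T Q k (fst z) (snd z) a m)" for a m
    by (rule Sf_dd[OF S])
  show ?thesis unfolding Xk_alt
    apply (intro ddM ddP ddC Sd)
    apply (auto intro!: Rd)
    done
qed

end


context
  fixes c :: "'n::finite pt" and i j :: 'n and \<rho> T Q e :: complex and p :: int
  assumes ij: "i \<noteq> j" and cH: "fst c $ i = \<rho> * fst c $ j"
    and T: "T \<noteq> 0" and Q: "Q \<noteq> 0"
    and hU: "\<forall>m. fst c $ m \<noteq> 0" and hV: "\<forall>a. snd c $ a \<noteq> 0"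
    and Qg: "\<forall>m::nat. m > 0 \<longrightarrow> (Q^2)^m \<noteq> 1"
    and e: "e = 1 \<or> e = -1" and rho: "\<rho> = e * Q powi p"
begin

lemmas ddM' = dd_mult[OF ij cH] and ddD' = dd_divide[OF ij cH] and ddC' = dd_const[OF ij cH]
  and ddU' = dd_U[OF ij cH] and ddQ' = dd_qbr[OF ij cH] and ddP' = dd_prod[OF ij cH]
  and ddI' = dd_inverse[OF ij cH] and ddph' = dd_ph[OF ij cH]

lemma qbrX_dd: "dd c i j \<rho> f \<Longrightarrow> f c \<noteq> 0 \<Longrightarrow> dd c i j \<rho> (\<lambda>z. qbrX (f z) Q n l0)"
  unfolding qbrX_def by (intro ddP' ddph' ddM' ddC') (use Q in auto)

lemma g1_dd:
  fixes a b :: nat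
  assumes xd: "dd c i j \<rho> X" and xc: "X c = e * Q powi p" and c1: "int b - int a < p" "p \<le> b"
  shows "dd c i j \<rho> (\<lambda>z. g1 T Q a b (X z) (nat (b - p)))"
proof -
  have x0: "X c \<noteq> 0" using xc Q e by auto
  have ixd: "dd c i j \<rho> (\<lambda>z. inverse (X z))" by (rule ddI'[OF xd x0])
  have den: "qbr Q Q a * qbr Q Q b * qbrX (inverse (Q^b) * X c) Q a (nat (b - p)) * qbr (inverse (Q^a) * inverse (X c)) Q b \<noteq> 0"
  proof -
    have "qbrX (inverse (Q^b) * (e * Q powi p)) Q a (nat (b - p)) \<noteq> 0"
      by (rule qbrX_nz, rule nzA[OF Q Qg e]) (use c1 in auto)
    moreover have "qbr (inverse (Q^a) * inverse (e * Q powi p)) Q b \<noteq> 0"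
      by (rule qbr_nz, rule nzB[OF Q Qg e]) (use c1 in auto)
    ultimately show ?thesis using qbrQQ_nz[OF Q Qg] xc by simp
  qed
  have num: "dd c i j \<rho> (\<lambda>z. qbr (Q*T) Q a * qbr (Q*T) Q b * qbr (inverse T * inverse (Q^b) * X z) Q a
      * qbr (inverse T * inverse (Q^a) * inverse (X z)) Q b)"
    by (intro ddM' ddC' ddQ' xd ixd) (use T Q x0 in auto)
  have dn: "dd c i j \<rho> (\<lambda>z. qbr Q Q a * qbr Q Q b * qbrX (inverse (Q^b) * X z) Q a (nat (b - p)) * qbr (inverse (Q^a) * inverse (X z)) Q b)"
    by (intro ddM' ddC' ddQ' qbrX_dd xd ixd) (use T Q x0 in auto)
  show ?thesis unfolding g1_def by (rule ddD'[OF num dn den])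
qed

lemma g2_dd:
  fixes a' b' b :: nat
  assumes xd: "dd c i j \<rho> X" and xc: "X c = e * Q powi p"
    and c2: "\<And>l. l < a' \<Longrightarrow> p - int b' + int l \<noteq> 0" and c3: "\<And>l. l < b' \<Longrightarrow> l \<noteq> b \<Longrightarrow> - int a' - p + int l \<noteq> 0"
  shows "dd c i j \<rho> (\<lambda>z. g2 T Q a' b' (X z) b)"
proof -
  have x0: "X c \<noteq> 0" using xc Q e by auto
  have ixd: "dd c i j \<rho> (\<lambda>z. inverse (X z))" by (rule ddI'[OF xd x0])
  have den: "qbr Q Q a' * qbr Q Q b' * qbr (inverse (Q^b') * X c) Q a' * qbrX (inverse (Q^a') * inverse (X c)) Q b' b \<noteq> 0"
  proof -
    have "qbr (inverse (Q^b') * (e * Q powi p)) Q a' \<noteq> 0"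
      by (rule qbr_nz, rule nzA[OF Q Qg e]) (use c2 in auto)
    moreover have "qbrX (inverse (Q^a') * inverse (e * Q powi p)) Q b' b \<noteq> 0"
      by (rule qbrX_nz, rule nzB[OF Q Qg e]) (use c3 in auto)
    ultimately show ?thesis using qbrQQ_nz[OF Q Qg] xc by simp
  qed
  have num: "dd c i j \<rho> (\<lambda>z. qbr (Q*T) Q a' * qbr (Q*T) Q b' * qbr (inverse T * inverse (Q^b') * X z) Q a'
      * qbr (inverse T * inverse (Q^a') * inverse (X z)) Q b')"
    by (intro ddM' ddC' ddQ' xd ixd) (use T Q x0 in auto)
  have dn: "dd c i j \<rho> (\<lambda>z. qbr Q Q a' * qbr Q Q b' * qbr (inverse (Q^b') * X z) Q a' * qbrX (inverse (Q^a') * inverse (X z)) Q b' b)"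
    by (intro ddM' ddC' ddQ' qbrX_dd xd ixd) (use T Q x0 in auto)
  show ?thesis unfolding g2_def by (rule ddD'[OF num dn den])
qed

lemma sum_eq:
  fixes k :: "'n \<Rightarrow> nat" and U V :: "complex^'n" and a b a' b' :: nat
  assumes ak: "k i = a" "k j = b" and a': "int a' = int b - p" and b': "int b' = int a + p"
    and ia: "a' < a" and bb: "b < b'"
  shows "Xk T Q k U V + Xk T Q (k(i := a', j := b')) U V =
     (Ek T Q k i j U V * g1 T Q a b (U$i / U$j) a' - Ek T Q (k(i := a', j := b')) i j U V * g2 T Q a' b' (U$i / U$j) b)
       / ph (Q powi (-p) * (U$i / U$j))"
proof -
  define x where "x = U$i / U$j"
  define k' where "k' = k(i := a', j := b')"
  have k'i: "k' i = a'" and k'j: "k' j = b'" using ij by (auto simp: k'_def)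
  have P1: "Q^a' * (inverse (Q^b) * x) = Q powi (-p) * x"
  proof -
    have "Q^a' = Q powi (int b - p)" using a' by (metis power_int_of_nat)
    then have "Q^a' = Q^b * Q powi (-p)" using Q by (simp add: power_int_diff power_int_minus divide_inverse)
    then show ?thesis using Q by (simp add: ac_simps)
  qed
  have P2: "Q^b * (inverse (Q^a') * inverse x) = inverse (Q powi (-p) * x)"
  proof -
    have "Q^a' = Q powi (int b - p)" using a' by (metis power_int_of_nat)
    then have "Q^a' = Q^b * Q powi (-p)" using Q by (simp add: power_int_diff power_int_minus divide_inverse)
    then show ?thesis using Q by (simp add: ac_simps)
  qed
  have X1: "Xk T Q k U V = Ek T Q k i j U V * (g1 T Q a b x a' / ph (Q powi (-p) * x))"
    unfolding Xk_decomp[OF ij, of T Q k U V] core_eq unfolding x_def[symmetric] ak coreF_g1[OF ia] P1 ..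
  have X2: "Xk T Q k' U V = Ek T Q k' i j U V * (g2 T Q a' b' x b / - ph (Q powi (-p) * x))"
    unfolding Xk_decomp[OF ij, of T Q k' U V] core_eq unfolding x_def[symmetric] k'i k'j coreF_g2[OF bb] P2 ph_inv ..
  show ?thesis unfolding k'_def[symmetric] x_def[symmetric] X1 X2
    by (simp add: diff_divide_distrib)
qed

lemma ev_nz: "isCont f c \<Longrightarrow> f c \<noteq> (0::complex) \<Longrightarrow> \<forall>\<^sub>F z in nhds c. f z \<noteq> 0"
  unfolding isCont_def eventually_nhds_conv_at by (simp add: tendsto_imp_eventually_ne)

lemma nhds_to_within: "\<forall>\<^sub>F z in nhds c. P z \<Longrightarrow> \<forall>\<^sub>F z in at c within S. P z"
  unfolding eventually_at_filter by (erule eventually_mono) simp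

lemma pair_limit:
  fixes k :: "'n \<Rightarrow> nat"
  assumes Ugen: "\<And>m m' s. m \<noteq> m' \<Longrightarrow> {m, m'} \<noteq> {i, j} \<Longrightarrow> (fst c $ m)^2 \<noteq> (Q^2) powi s * (fst c $ m')^2"
    and UVgen: "\<And>m a s. (fst c $ m)^2 \<noteq> (Q^2) powi s * (snd c $ a)^2"
    and c1: "int (k j) - int (k i) < p" "p \<le> int (k j)"
  shows "\<exists>l. ((\<lambda>z. Xk T Q k (fst z) (snd z) + Xk T Q (k(i := nat (int (k j) - p), j := nat (int (k i) + p))) (fst z) (snd z)) \<longlongrightarrow> l) (at c within generic_pt Q)"
proof -
  define a where "a = k i"
  define b where "b = k j"
  define a' where "a' = nat (int b - p)"
  define b' where "b' = nat (int a + p)"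
  define k' where "k' = k(i := a', j := b')"
  have c1': "int b - int a < p" "p \<le> int b" using c1 by (auto simp: a_def b_def)
  have a': "int a' = int b - p" and b': "int b' = int a + p" and ia: "a' < a" and bb: "b < b'"
    using c1' by (auto simp: a'_def b'_def)
  have k'eq: "k(i := nat (int (k j) - p), j := nat (int (k i) + p)) = k'"
    by (simp add: k'_def a'_def b'_def a_def b_def)
  define X where "X z = fst z $ i / fst z $ j" for z :: "'n pt"
  have xd: "dd c i j \<rho> X" unfolding X_def by (intro ddD' ddU') (use hU in auto)
  have xc: "X c = e * Q powi p" unfolding X_def cH using hU rho by simp
  have Rnz: "qbr (inverse (Q ^ kk m') * fst c $ m / fst c $ m') Q (kk m) \<noteq> 0"
    if "m \<noteq> m'" "{m, m'} \<noteq> {i, j}" for m m' and kk :: "'n \<Rightarrow> nat"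
    by (rule qbr_ratio_nz[OF Q]) (use hU Ugen that in auto)
  have Snz: "qbr (fst c $ m / snd c $ aa) Q (kk m) \<noteq> 0" for m aa and kk :: "'n \<Rightarrow> nat"
    by (rule qbr_ratio_nz0[OF Q]) (use hU hV UVgen in auto)
  have Ekd: "dd c i j \<rho> (\<lambda>z. Ek T Q kk i j (fst z) (snd z))" for kk :: "'n \<Rightarrow> nat"
    by (rule Ek_dd[OF ij cH T Q hU hV Rnz Snz])
  have g1d: "dd c i j \<rho> (\<lambda>z. g1 T Q a b (X z) a')"
    unfolding a'_def by (rule g1_dd[OF xd xc c1'])
  have g2d: "dd c i j \<rho> (\<lambda>z. g2 T Q a' b' (X z) b)"
    by (rule g2_dd[OF xd xc]) (use a' b' ia in auto)
  define h where "h z = Ek T Q k i j (fst z) (snd z) * g1 T Q a b (X z) a' - Ek T Q k' i j (fst z) (snd z) * g2 T Q a' b' (X z) b" for z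
  have hd: "dd c i j \<rho> h" unfolding h_def
    by (intro dd_diff[OF ij cH] ddM' Ekd g1d g2d)
  have evj: "\<forall>\<^sub>F z in nhds c. fst z $ j \<noteq> 0"
    by (rule ev_nz) (use hU in auto)
  have hz: "\<forall>\<^sub>F z in nhds c. h (piH i j \<rho> z) = 0"
    using evj
  proof eventually_elim
    case (elim z)
    define w where "w = piH i j \<rho> z"
    have wj: "fst w $ j = fst z $ j" using ij by (simp add: w_def piH_fst)
    have wi: "fst w $ i = \<rho> * fst w $ j" using wj by (simp add: w_def piH_fst)
    have Xw: "X w = e * Q powi p" unfolding X_def wi using elim wj rho by simp
    have E: "Ek T Q k i j (fst w) (snd w) = Ek T Q k' i j (fst w) (snd w)"
      unfolding k'_def by (rule Ek_sigma[OF ij Q e]) (use wi wj elim rho a' b' in \<open>auto simp: a_def b_def\<close>)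
    have G: "g1 T Q a b (e * Q powi p) a' = g2 T Q a' b' (e * Q powi p) b"
      unfolding a'_def by (rule core_identity[OF T Q e c1']) (use a' b' in \<open>auto simp: a'_def\<close>)
    show ?case unfolding w_def[symmetric] h_def Xw E G by simp
  qed
  obtain D where Dc: "isCont D c" and hD: "\<forall>\<^sub>F z in nhds c. h z = dl i j \<rho> z * D z"
    using dd_limit[OF ij cH hd hz] by blast
  define \<kappa> where "\<kappa> z = Q powi (-p) * (fst z $ i + \<rho> * fst z $ j) / (fst z $ i * fst z $ j)" for z :: "'n pt"
  have \<kappa>c: "isCont \<kappa> c" unfolding \<kappa>_def using hU by (intro continuous_intros) auto
  have \<kappa>0: "\<kappa> c \<noteq> 0" unfolding \<kappa>_def cH using hU Q rho e by auto
  have lim: "((\<lambda>z. D z / \<kappa> z) \<longlongrightarrow> D c / \<kappa> c) (at c within generic_pt Q)"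
    using Dc \<kappa>c \<kappa>0 by (intro tendsto_intros) (auto simp: isCont_def intro: tendsto_within_subset)
  have rho2: "\<rho>^2 = (Q^2) powi p" using rho e by (auto simp: power_mult_distrib power_int_mult_distrib power2_eq_square)
  have ev: "\<forall>\<^sub>F z in at c within generic_pt Q. D z / \<kappa> z = Xk T Q k (fst z) (snd z) + Xk T Q k' (fst z) (snd z)"
  proof -
    have "\<forall>\<^sub>F z in at c within generic_pt Q. h z = dl i j \<rho> z * D z" by (rule nhds_to_within[OF hD])
    moreover have "\<forall>\<^sub>F z in at c within generic_pt Q. z \<in> generic_pt Q"
      by (simp add: eventually_at_filter)
    ultimately show ?thesis
    proof eventually_elim
      case (elim z)
      obtain U V where z: "z = (U, V)" by fastforce
      have gen: "\<forall>m. U$m \<noteq> 0" "U$i^2 \<noteq> (Q^2) powi p * U$j^2"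
        using elim(2) ij unfolding z generic_pt_def by auto
      have dl0: "dl i j \<rho> z \<noteq> 0"
      proof
        assume "dl i j \<rho> z = 0"
        then have "U$i = \<rho> * U$j" unfolding dl_def z by simp
        then have "U$i^2 = (Q^2) powi p * U$j^2" using rho2 by (simp add: power_mult_distrib)
        then show False using gen by simp
      qed
      have phk: "ph (Q powi (-p) * (U$i / U$j)) = dl i j \<rho> z * \<kappa> z"
      proof -
        have qp: "Q powi p \<noteq> 0" using Q by simp
        have ee: "e * e = 1" using e by auto
        show ?thesis unfolding ph_def dl_def \<kappa>_def z fst_conv rho using gen qp ee
          by (simp add: power_int_minus field_simps)
      qed
      have "Xk T Q k U V + Xk T Q k' U V = h z / ph (Q powi (-p) * (U$i / U$j))"
        unfolding k'_def h_def z fst_conv snd_conv X_def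
        by (rule sum_eq) (use a' b' ia bb in \<open>auto simp: a_def b_def\<close>)
      also have "\<dots> = D z / \<kappa> z" unfolding phk elim(1) using dl0 by simp
      finally show ?case unfolding z by simp
    qed
  qed
  have "((\<lambda>z. Xk T Q k (fst z) (snd z) + Xk T Q k' (fst z) (snd z)) \<longlongrightarrow> D c / \<kappa> c) (at c within generic_pt Q)"
    by (rule Lim_transform_eventually[OF lim ev])
  then show ?thesis unfolding k'eq by blast
qed

lemma Xk_cont_nonP:
  fixes k :: "'n \<Rightarrow> nat"
  assumes Ugen: "\<And>m m' s. m \<noteq> m' \<Longrightarrow> {m, m'} \<noteq> {i, j} \<Longrightarrow> (fst c $ m)^2 \<noteq> (Q^2) powi s * (fst c $ m')^2"
    and UVgen: "\<And>m a s. (fst c $ m)^2 \<noteq> (Q^2) powi s * (snd c $ a)^2"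
    and np1: "\<And>l. l < k i \<Longrightarrow> p - int (k j) + int l \<noteq> 0"
    and np2: "\<And>l. l < k j \<Longrightarrow> - int (k i) - p + int l \<noteq> 0"
  shows "isCont (\<lambda>z. Xk T Q k (fst z) (snd z)) c"
proof -
  have R: "qbr (inverse (Q ^ k m') * fst c $ m / fst c $ m') Q (k m) \<noteq> 0" if mm: "m \<noteq> m'" for m m'
  proof (cases "{m, m'} = {i, j}")
    case False
    show ?thesis by (rule qbr_ratio_nz[OF Q]) (use hU Ugen mm False in auto)
  next
    case True
    then have "(m = i \<and> m' = j) \<or> (m = j \<and> m' = i)" using mm by (auto simp: doubleton_eq_iff)
    then show ?thesis
    proof
      assume "m = i \<and> m' = j"
      then have mi: "m = i" and mj: "m' = j" by auto
      have "inverse (Q ^ k j) * fst c $ i / fst c $ j = inverse (Q ^ k j) * (e * Q powi p)"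
        unfolding cH rho using hU by simp
      then show ?thesis unfolding mi mj
        by (simp only:) (rule qbr_nz, rule nzA[OF Q Qg e], use np1 in auto)
    next
      assume "m = j \<and> m' = i"
      then have mi: "m = j" and mj: "m' = i" by auto
      have "inverse (Q ^ k i) * fst c $ j / fst c $ i = inverse (Q ^ k i) * inverse (e * Q powi p)"
        unfolding cH rho using hU by (simp add: field_simps)
      then show ?thesis unfolding mi mj
        by (simp only:) (rule qbr_nz, rule nzB[OF Q Qg e], use np2 in auto)
    qed
  qed
  have S: "qbr (fst c $ m / snd c $ aa) Q (k m) \<noteq> 0" for m aa
    by (rule qbr_ratio_nz0[OF Q]) (use hU hV UVgen in auto)
  show ?thesis by (rule dd_isCont[OF ij cH Xk_dd[OF ij cH T Q hU hV R S]])
qed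

end


lemma finite_KS: "finite {k::'n::finite \<Rightarrow> nat. sum k UNIV = K}"
proof -
  have "{k::'n \<Rightarrow> nat. sum k UNIV = K} \<subseteq> Pi\<^sub>E UNIV (\<lambda>_. {..K})"
  proof
    fix k :: "'n \<Rightarrow> nat" assume "k \<in> {k. sum k UNIV = K}"
    then have "k m \<le> K" for m using member_le_sum[of m UNIV k] by auto
    then show "k \<in> Pi\<^sub>E UNIV (\<lambda>_. {..K})" by (auto simp: PiE_UNIV_domain)
  qed
  moreover have "finite (Pi\<^sub>E (UNIV::'n set) (\<lambda>_. {..K}))" by (intro finite_PiE) auto
  ultimately show ?thesis by (rule finite_subset)
qed

lemma sum_ij:
  fixes f :: "'n::finite \<Rightarrow> nat"
  assumes "i \<noteq> j" shows "(\<Sum>m\<in>UNIV. f m) = f i + f j + (\<Sum>m\<in>UNIV - {i, j}. f m)"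
proof -
  have "UNIV = insert i (insert j (UNIV - {i, j}))" by auto
  then have "(\<Sum>m\<in>UNIV. f m) = (\<Sum>m\<in>insert i (insert j (UNIV - {i, j})). f m)" by simp
  also have "\<dots> = f i + f j + (\<Sum>m\<in>UNIV - {i, j}. f m)" using assms by (simp add: add.assoc)
  finally show ?thesis .
qed

lemma cont_within: "isCont f c \<Longrightarrow> (f \<longlongrightarrow> f c) (at c within S)"
  by (simp add: continuous_at_imp_continuous_at_within continuous_within[symmetric])

lemma L_uu:
  fixes T Q :: complex and K :: nat and i j :: "'n::finite" and p :: int and c :: "'n pt"
  assumes T: "T \<noteq> 0" and Q: "Q \<noteq> 0" and Qg: "\<forall>m::nat. m > 0 \<longrightarrow> (Q^2)^m \<noteq> 1"
    and ij: "i \<noteq> j" and cg: "c \<in> generic_on_uu Q i j p"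
  shows "\<exists>l. ((\<lambda>z. Lsum T Q K (fst z) (snd z)) \<longlongrightarrow> l) (at c within generic_pt Q)"
proof -
  have hU: "\<forall>m. fst c $ m \<noteq> 0" and hV: "\<forall>a. snd c $ a \<noteq> 0"
    and hH: "(fst c $ i)^2 = (Q^2) powi p * (fst c $ j)^2"
    and Ugen: "\<And>m m' s. m \<noteq> m' \<Longrightarrow> {m, m'} \<noteq> {i, j} \<Longrightarrow> (fst c $ m)^2 \<noteq> (Q^2) powi s * (fst c $ m')^2"
    and UVgen: "\<And>m a s. (fst c $ m)^2 \<noteq> (Q^2) powi s * (snd c $ a)^2"
  proof -
    obtain U0 V0 where c: "c = (U0, V0)" by fastforce
    have G: "(\<forall>i. U0$i \<noteq> 0) \<and> (\<forall>a. V0$a \<noteq> 0) \<and>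
     (U0$i)^2 = (Q^2) powi p * (U0$j)^2 \<and>
     (\<forall>ia ja (pa::int). ia \<noteq> ja \<and> {ia, ja} \<noteq> {i, j} \<longrightarrow> (U0$ia)^2 \<noteq> (Q^2) powi pa * (U0$ja)^2) \<and>
     (\<forall>a b (pa::int). a \<noteq> b \<longrightarrow> (V0$a)^2 \<noteq> (Q^2) powi pa * (V0$b)^2) \<and>
     (\<forall>ja a (pa::int). (U0$ja)^2 \<noteq> (Q^2) powi pa * (V0$a)^2)"
      using cg unfolding c generic_on_uu_def by simp
    show "\<forall>m. fst c $ m \<noteq> 0" "\<forall>a. snd c $ a \<noteq> 0" "(fst c $ i)^2 = (Q^2) powi p * (fst c $ j)^2"
      using G unfolding c by auto
    show "\<And>m m' s. m \<noteq> m' \<Longrightarrow> {m, m'} \<noteq> {i, j} \<Longrightarrow> (fst c $ m)^2 \<noteq> (Q^2) powi s * (fst c $ m')^2"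
      using G unfolding c fst_conv by blast
    show "\<And>m a s. (fst c $ m)^2 \<noteq> (Q^2) powi s * (snd c $ a)^2"
      using G unfolding c fst_conv snd_conv by blast
  qed
  define \<rho> where "\<rho> = fst c $ i / fst c $ j"
  have cH: "fst c $ i = \<rho> * fst c $ j" unfolding \<rho>_def using hU by simp
  define e where "e = \<rho> / Q powi p"
  have rho: "\<rho> = e * Q powi p" unfolding e_def using Q by simp
  have e: "e = 1 \<or> e = -1"
  proof -
    have qp: "Q powi p \<noteq> 0" using Q by simp
    have "(Q^2) powi p = Q powi p * Q powi p" by (simp add: power2_eq_square power_int_mult_distrib)
    then have "\<rho>^2 = (Q powi p)^2" using hH cH hU by (simp add: power_mult_distrib power2_eq_square)
    then have "e^2 = 1" unfolding e_def using qp by (simp add: power_divide)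
    then show ?thesis by (simp add: power2_eq_1_iff)
  qed
  define KS where "KS = {k::'n \<Rightarrow> nat. sum k UNIV = K}"
  have fin: "finite KS" unfolding KS_def by (rule finite_KS)
  define P where "P = {k \<in> KS. (0 \<le> int (k j) - p \<and> int (k j) - p < int (k i)) \<or> (0 \<le> int (k i) + p \<and> int (k i) + p < int (k j))}"
  define \<sigma> where "\<sigma> k = k(i := nat (int (k j) - p), j := nat (int (k i) + p))" for k :: "'n \<Rightarrow> nat"
  have \<sigma>i: "\<sigma> k i = nat (int (k j) - p)" and \<sigma>j: "\<sigma> k j = nat (int (k i) + p)"
    and \<sigma>m: "m \<noteq> i \<Longrightarrow> m \<noteq> j \<Longrightarrow> \<sigma> k m = k m" for k m using ij by (auto simp: \<sigma>_def)
  have PKS: "P \<subseteq> KS" unfolding P_def by auto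
  have \<sigma>P: "\<sigma> k \<in> P" if kP: "k \<in> P" for k
  proof -
    have kK: "sum k UNIV = K" using kP by (auto simp: P_def KS_def)
    have nn: "0 \<le> int (k j) - p" "0 \<le> int (k i) + p" using kP by (auto simp: P_def)
    have "sum (\<sigma> k) UNIV = \<sigma> k i + \<sigma> k j + (\<Sum>m\<in>UNIV - {i, j}. \<sigma> k m)" by (rule sum_ij[OF ij])
    also have "(\<Sum>m\<in>UNIV - {i, j}. \<sigma> k m) = (\<Sum>m\<in>UNIV - {i, j}. k m)" by (rule sum.cong) (auto simp: \<sigma>m)
    also have "\<sigma> k i + \<sigma> k j = k i + k j" unfolding \<sigma>i \<sigma>j using nn by linarith
    also have "k i + k j + (\<Sum>m\<in>UNIV - {i, j}. k m) = K" using kK sum_ij[OF ij, of k] by simp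
    finally have "\<sigma> k \<in> KS" unfolding KS_def by simp
    then show ?thesis using kP nn by (auto simp: P_def \<sigma>i \<sigma>j)
  qed
  have \<sigma>\<sigma>: "\<sigma> (\<sigma> k) = k" if kP: "k \<in> P" for k
  proof
    fix m
    have nn: "0 \<le> int (k j) - p" "0 \<le> int (k i) + p" using kP by (auto simp: P_def)
    show "\<sigma> (\<sigma> k) m = k m"
      using nn ij by (cases "m = i"; cases "m = j") (auto simp: \<sigma>i \<sigma>j \<sigma>m)
  qed
  have bij: "bij_betw \<sigma> P P"
    by (rule bij_betw_byWitness[where f'=\<sigma>]) (auto simp: \<sigma>\<sigma> \<sigma>P)
  define X where "X k z = Xk T Q k (fst z) (snd z)" for k :: "'n \<Rightarrow> nat" and z :: "'n pt"
  have split: "Lsum T Q K (fst z) (snd z) = (\<Sum>k\<in>KS - P. X k z) + (1/2) * (\<Sum>k\<in>P. X k z + X (\<sigma> k) z)" for z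
  proof -
    have "Lsum T Q K (fst z) (snd z) = (\<Sum>k\<in>KS. X k z)" unfolding Lsum_def KS_def X_def ..
    also have "\<dots> = (\<Sum>k\<in>KS - P. X k z) + (\<Sum>k\<in>P. X k z)" by (rule sum.subset_diff[OF PKS fin])
    also have "(\<Sum>k\<in>P. X (\<sigma> k) z) = (\<Sum>k\<in>P. X k z)" by (rule sum.reindex_bij_betw[OF bij])
    then have "(\<Sum>k\<in>P. X k z) = (1/2) * (\<Sum>k\<in>P. X k z + X (\<sigma> k) z)" by (simp add: sum.distrib)
    finally show ?thesis .
  qed
  let ?F = "at c within generic_pt Q"
  have nonP: "(X k \<longlongrightarrow> X k c) ?F" if k: "k \<in> KS - P" for k
  proof -
    have "isCont (X k) c" unfolding X_def
    proof (rule Xk_cont_nonP[OF ij cH T Q hU hV Qg e rho Ugen UVgen])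
      show "p - int (k j) + int l \<noteq> 0" if "l < k i" for l using k that by (auto simp: P_def)
      show "- int (k i) - p + int l \<noteq> 0" if "l < k j" for l using k that by (auto simp: P_def)
    qed
    then show ?thesis by (rule cont_within)
  qed
  have pairs: "\<exists>l. ((\<lambda>z. X k z + X (\<sigma> k) z) \<longlongrightarrow> l) ?F" if k: "k \<in> P" for k
  proof (cases "int (k j) - int (k i) < p \<and> p \<le> int (k j)")
    case True
    then show ?thesis unfolding X_def \<sigma>_def
      using pair_limit[OF ij cH T Q hU hV Qg e rho Ugen UVgen] by blast
  next
    case False
    have c2: "0 \<le> int (k i) + p" "int (k i) + p < int (k j)" using k False by (auto simp: P_def)
    have "int (\<sigma> k j) - int (\<sigma> k i) < p \<and> p \<le> int (\<sigma> k j)" using c2 unfolding \<sigma>i \<sigma>j by auto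
    then obtain l where "((\<lambda>z. X (\<sigma> k) z + X (\<sigma> (\<sigma> k)) z) \<longlongrightarrow> l) ?F"
      unfolding X_def \<sigma>_def[of "\<sigma> k"]
      using pair_limit[OF ij cH T Q hU hV Qg e rho Ugen UVgen, of "\<sigma> k"] by blast
    then have "((\<lambda>z. X k z + X (\<sigma> k) z) \<longlongrightarrow> l) ?F" unfolding \<sigma>\<sigma>[OF k] by (simp add: add.commute)
    then show ?thesis by blast
  qed
  then obtain L where L: "\<And>k. k \<in> P \<Longrightarrow> ((\<lambda>z. X k z + X (\<sigma> k) z) \<longlongrightarrow> L k) ?F"
    by metis
  have "((\<lambda>z. (\<Sum>k\<in>KS - P. X k z) + (1/2) * (\<Sum>k\<in>P. X k z + X (\<sigma> k) z)) \<longlongrightarrow>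
          (\<Sum>k\<in>KS - P. X k c) + (1/2) * (\<Sum>k\<in>P. L k)) ?F"
    by (intro tendsto_add tendsto_mult tendsto_const tendsto_sum nonP L) auto
  then show ?thesis unfolding split[symmetric] by blast
qed


lemma Lsum_cont:
  fixes T Q :: complex and K :: nat and i j :: "'n::finite" and c :: "'n pt"
  assumes T: "T \<noteq> 0" and Q: "Q \<noteq> 0" and ij: "i \<noteq> j"
    and hU: "\<forall>m. fst c $ m \<noteq> 0" and hV: "\<forall>a. snd c $ a \<noteq> 0"
    and Ugen: "\<And>m m' s. m \<noteq> m' \<Longrightarrow> (fst c $ m)^2 \<noteq> (Q^2) powi s * (fst c $ m')^2"
    and UVgen: "\<And>m a s. (fst c $ m)^2 \<noteq> (Q^2) powi s * (snd c $ a)^2"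
  shows "isCont (\<lambda>z. Lsum T Q K (fst z) (snd z)) c"
proof -
  define \<rho> where "\<rho> = fst c $ i / fst c $ j"
  have cH: "fst c $ i = \<rho> * fst c $ j" unfolding \<rho>_def using hU by simp
  have R: "qbr (inverse (Q ^ k m') * fst c $ m / fst c $ m') Q (k m) \<noteq> 0" if "m \<noteq> m'" for m m' and k :: "'n \<Rightarrow> nat"
    by (rule qbr_ratio_nz[OF Q]) (use hU Ugen that in auto)
  have S: "qbr (fst c $ m / snd c $ aa) Q (k m) \<noteq> 0" for m aa and k :: "'n \<Rightarrow> nat"
    by (rule qbr_ratio_nz0[OF Q]) (use hU hV UVgen in auto)
  have "isCont (\<lambda>z. Xk T Q k (fst z) (snd z)) c" for k
    by (rule dd_isCont[OF ij cH Xk_dd[OF ij cH T Q hU hV R S]])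
  then show ?thesis unfolding Lsum_def by (intro isCont_sum) auto
qed

definition invv :: "complex^'n::finite \<Rightarrow> complex^'n" where
  "invv W = (\<chi> m. inverse (W $ m))"

definition Phi :: "'n::finite pt \<Rightarrow> 'n pt" where
  "Phi z = (invv (snd z), invv (fst z))"

lemma invv_nth[simp]: "invv W $ m = inverse (W $ m)" by (simp add: invv_def)
lemma invv_invv[simp]: "invv (invv W) = W" by (simp add: vec_eq_iff)
lemma Phi_Phi[simp]: "Phi (Phi z) = z" by (simp add: Phi_def)

lemma prod_offdiag_swap:
  fixes g :: "'n::finite \<Rightarrow> 'n \<Rightarrow> complex"
  shows "(\<Prod>x\<in>UNIV. \<Prod>y\<in>UNIV - {x}. g x y) = (\<Prod>y\<in>UNIV. \<Prod>x\<in>UNIV - {y}. g x y)"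
proof -
  have e: "(\<Prod>y\<in>UNIV - {x}. h y) = (\<Prod>y\<in>UNIV. if y = x then 1 else h y)" for x and h :: "'n \<Rightarrow> complex"
    by (subst prod.If_cases) (auto simp: Compl_eq_Diff_UNIV)
  have "(\<Prod>x\<in>UNIV. \<Prod>y\<in>UNIV - {x}. g x y) = (\<Prod>x\<in>UNIV. \<Prod>y\<in>UNIV. if y = x then 1 else g x y)"
    by (simp only: e)
  also have "\<dots> = (\<Prod>y\<in>UNIV. \<Prod>x\<in>UNIV. if y = x then 1 else g x y)" by (rule prod.swap)
  also have "\<dots> = (\<Prod>y\<in>UNIV. \<Prod>x\<in>UNIV. if x = y then 1 else g x y)"
    by (intro prod.cong refl) auto
  also have "\<dots> = (\<Prod>y\<in>UNIV. \<Prod>x\<in>UNIV - {y}. g x y)"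
    by (simp only: e)
  finally show ?thesis .
qed

lemma Yk_sym: "Yk T Q k U V = Xk T Q k (invv V) (invv U)"
proof -
  have A2: "(\<Prod>a\<in>UNIV. \<Prod>b\<in>UNIV - {a}.
        qbr (inverse T * inverse (Q ^ k a) * V$a / V$b) Q (k b) /
        qbr (inverse (Q ^ k a) * V$a / V$b) Q (k b)) =
     (\<Prod>i\<in>UNIV. \<Prod>j\<in>UNIV - {i}.
        qbr (inverse T * inverse (Q ^ k j) * invv V$i / invv V$j) Q (k i) /
        qbr (inverse (Q ^ k j) * invv V$i / invv V$j) Q (k i))"
    by (subst prod_offdiag_swap) (simp add: divide_inverse ac_simps)
  have A3: "(\<Prod>a\<in>UNIV. \<Prod>j\<in>UNIV.
        qbr (T * U$j / V$a) Q (k a) / qbr (U$j / V$a) Q (k a)) =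
     (\<Prod>a\<in>UNIV. \<Prod>j\<in>UNIV.
        qbr (T * invv V$j / invv U$a) Q (k j) / qbr (invv V$j / invv U$a) Q (k j))"
    by (subst prod.swap) (simp add: divide_inverse ac_simps)
  show ?thesis unfolding Yk_def Xk_def A2 A3 ..
qed

lemma Rsum_sym: "Rsum T Q K U V = Lsum T Q K (invv V) (invv U)"
  unfolding Rsum_def Lsum_def Yk_sym ..

lemma inv_sq_iff:
  fixes A B X :: complex
  assumes "A \<noteq> 0" "B \<noteq> 0"
  shows "(inverse A)^2 = X * (inverse B)^2 \<longleftrightarrow> B^2 = X * A^2"
  using assms by (auto simp: field_simps power2_eq_square)

lemma Phi_generic_pt: "z \<in> generic_pt Q \<Longrightarrow> Phi z \<in> generic_pt Q"
proof -
  assume "z \<in> generic_pt Q"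
  then obtain U V where z: "z = (U, V)" and G:
    "(\<forall>i. U$i \<noteq> 0)" "(\<forall>a. V$a \<noteq> 0)"
    "(\<forall>i j (p::int). i \<noteq> j \<longrightarrow> (U$i)^2 \<noteq> (Q^2) powi p * (U$j)^2)"
    "(\<forall>a b (p::int). a \<noteq> b \<longrightarrow> (V$a)^2 \<noteq> (Q^2) powi p * (V$b)^2)"
    "(\<forall>j a (p::int). (U$j)^2 \<noteq> (Q^2) powi p * (V$a)^2)"
    unfolding generic_pt_def by auto
  show ?thesis unfolding z Phi_def generic_pt_def using G
    by (auto simp: inv_sq_iff)
qed

lemma Phi_vv_uu: "Q \<noteq> 0 \<Longrightarrow> c \<in> generic_on_vv Q a b p \<Longrightarrow> Phi c \<in> generic_on_uu Q a b (-p)"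
proof -
  assume Q: "Q \<noteq> 0" and "c \<in> generic_on_vv Q a b p"
  then obtain U V where z: "c = (U, V)" and G:
    "(\<forall>i. U$i \<noteq> 0)" "(\<forall>a. V$a \<noteq> 0)"
    "(V$a)^2 = (Q^2) powi p * (V$b)^2"
    "(\<forall>i j (p::int). i \<noteq> j \<longrightarrow> (U$i)^2 \<noteq> (Q^2) powi p * (U$j)^2)"
    "(\<forall>a' b' (p::int). a' \<noteq> b' \<and> {a', b'} \<noteq> {a, b} \<longrightarrow> (V$a')^2 \<noteq> (Q^2) powi p * (V$b')^2)"
    "(\<forall>j a (p::int). (U$j)^2 \<noteq> (Q^2) powi p * (V$a)^2)"
    unfolding generic_on_vv_def by auto
  have e1: "(inverse (V$a))^2 = (Q^2) powi (-p) * (inverse (V$b))^2"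
  proof -
    have qq: "(Q^2) powi (-p) * (Q^2) powi p = 1" using Q by (simp add: power_int_minus)
    have "(V$b)^2 = (Q^2) powi (-p) * (V$a)^2" unfolding G(3) using qq by (simp add: mult.assoc[symmetric])
    then show ?thesis using G(2) by (simp add: inv_sq_iff)
  qed
  have e2: "\<forall>i j (pa::int). i \<noteq> j \<and> {i, j} \<noteq> {a, b} \<longrightarrow> (inverse (V$i))^2 \<noteq> (Q^2) powi pa * (inverse (V$j))^2"
  proof (intro allI impI)
    fix i j and pa :: int assume h: "i \<noteq> j \<and> {i, j} \<noteq> {a, b}"
    then have h': "j \<noteq> i \<and> {j, i} \<noteq> {a, b}" by (auto simp: insert_commute)
    have ne: "(V$j)^2 \<noteq> (Q^2) powi pa * (V$i)^2" using G(5) h' by blast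
    show "(inverse (V$i))^2 \<noteq> (Q^2) powi pa * (inverse (V$j))^2"
      using inv_sq_iff[of "V$i" "V$j"] G(2) ne by simp
  qed
  show ?thesis unfolding z Phi_def generic_on_uu_def using G e1 e2
    by (auto simp: inv_sq_iff)
qed


lemma isCont_Phi:
  assumes "\<forall>m. fst c $ m \<noteq> 0" "\<forall>a. snd c $ a \<noteq> 0"
  shows "isCont Phi c"
  unfolding isCont_def Phi_def invv_def
  using assms by (auto intro!: tendsto_intros)

lemma filterlim_Phi:
  assumes "\<forall>m. fst c $ m \<noteq> 0" "\<forall>a. snd c $ a \<noteq> 0"
  shows "filterlim Phi (at (Phi c) within generic_pt Q) (at c within generic_pt Q)"
  unfolding filterlim_at
proof
  show "\<forall>\<^sub>F z in at c within generic_pt Q. Phi z \<in> generic_pt Q \<and> Phi z \<noteq> Phi c"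
    unfolding eventually_at_filter
    by (rule always_eventually) (metis Phi_Phi Phi_generic_pt)
  show "(Phi \<longlongrightarrow> Phi c) (at c within generic_pt Q)"
    by (rule cont_within[OF isCont_Phi[OF assms]])
qed

lemma cp: "(\<lambda>(U, V). F U V) = (\<lambda>z. F (fst z) (snd z))"
  by (rule ext) (simp add: case_prod_beta)

lemma R_vv:
  fixes T Q :: complex and K :: nat and a b :: "'n::finite" and p :: int and c :: "'n pt"
  assumes T: "T \<noteq> 0" and Q: "Q \<noteq> 0" and Qg: "\<forall>m::nat. m > 0 \<longrightarrow> (Q^2)^m \<noteq> 1"
    and ab: "a \<noteq> b" and cg: "c \<in> generic_on_vv Q a b p"
  shows "\<exists>l. ((\<lambda>z. Rsum T Q K (fst z) (snd z)) \<longlongrightarrow> l) (at c within generic_pt Q)"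
proof -
  have h: "\<forall>m. fst c $ m \<noteq> 0" "\<forall>a. snd c $ a \<noteq> 0" using cg unfolding generic_on_vv_def by auto
  obtain l where l: "((\<lambda>z. Lsum T Q K (fst z) (snd z)) \<longlongrightarrow> l) (at (Phi c) within generic_pt Q)"
    using L_uu[OF T Q Qg ab Phi_vv_uu[OF Q cg]] by blast
  have "((\<lambda>z. Lsum T Q K (fst (Phi z)) (snd (Phi z))) \<longlongrightarrow> l) (at c within generic_pt Q)"
    by (rule filterlim_compose[OF l filterlim_Phi[OF h]])
  then show ?thesis unfolding Phi_def fst_conv snd_conv Rsum_sym[symmetric] by blast
qed

lemma R_uu:
  fixes T Q :: complex and K :: nat and i j :: "'n::finite" and p :: int and c :: "'n pt"
  assumes T: "T \<noteq> 0" and Q: "Q \<noteq> 0"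
    and ij: "i \<noteq> j" and cg: "c \<in> generic_on_uu Q i j p"
  shows "\<exists>l. ((\<lambda>z. Rsum T Q K (fst z) (snd z)) \<longlongrightarrow> l) (at c within generic_pt Q)"
proof -
  obtain U V where c: "c = (U, V)" by fastforce
  have G: "\<forall>m. U$m \<noteq> 0" "\<forall>a. V$a \<noteq> 0"
    "\<forall>a b (p::int). a \<noteq> b \<longrightarrow> (V$a)^2 \<noteq> (Q^2) powi p * (V$b)^2"
    "\<forall>j a (p::int). (U$j)^2 \<noteq> (Q^2) powi p * (V$a)^2"
    using cg unfolding c generic_on_uu_def by auto
  have h: "\<forall>m. fst c $ m \<noteq> 0" "\<forall>a. snd c $ a \<noteq> 0" using G unfolding c by auto
  have "isCont (\<lambda>z. Lsum T Q K (fst z) (snd z)) (Phi c)"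
  proof (rule Lsum_cont[OF T Q ij])
    show "\<forall>m. fst (Phi c) $ m \<noteq> 0" "\<forall>a. snd (Phi c) $ a \<noteq> 0" using G by (auto simp: c Phi_def)
    show "(fst (Phi c) $ m)^2 \<noteq> (Q^2) powi s * (fst (Phi c) $ m')^2" if "m \<noteq> m'" for m m' s
    proof -
      have "(V$m')^2 \<noteq> (Q^2) powi s * (V$m)^2" using G(3) that by auto
      then show ?thesis using inv_sq_iff[of "V$m" "V$m'"] G(2) by (simp add: c Phi_def)
    qed
    show "(fst (Phi c) $ m)^2 \<noteq> (Q^2) powi s * (snd (Phi c) $ aa)^2" for m aa s
    proof -
      have "(U$aa)^2 \<noteq> (Q^2) powi s * (V$m)^2" using G(4) by auto
      then show ?thesis using inv_sq_iff[of "V$m" "U$aa"] G(1,2) by (simp add: c Phi_def)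
    qed
  qed
  then have "isCont (\<lambda>z. Lsum T Q K (fst (Phi z)) (snd (Phi z))) c"
    using isCont_o2[OF isCont_Phi[OF h]] by blast
  then have "((\<lambda>z. Lsum T Q K (fst (Phi z)) (snd (Phi z))) \<longlongrightarrow> Lsum T Q K (fst (Phi c)) (snd (Phi c))) (at c within generic_pt Q)"
    by (rule cont_within)
  then show ?thesis unfolding Phi_def fst_conv snd_conv Rsum_sym[symmetric] by blast
qed

lemma L_vv:
  fixes T Q :: complex and K :: nat and a b :: "'n::finite" and p :: int and c :: "'n pt"
  assumes T: "T \<noteq> 0" and Q: "Q \<noteq> 0"
    and ab: "a \<noteq> b" and cg: "c \<in> generic_on_vv Q a b p"
  shows "\<exists>l. ((\<lambda>z. Lsum T Q K (fst z) (snd z)) \<longlongrightarrow> l) (at c within generic_pt Q)"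
proof -
  obtain U V where c: "c = (U, V)" by fastforce
  have G: "\<forall>m. U$m \<noteq> 0" "\<forall>a. V$a \<noteq> 0"
    "\<forall>i j (p::int). i \<noteq> j \<longrightarrow> (U$i)^2 \<noteq> (Q^2) powi p * (U$j)^2"
    "\<forall>j a (p::int). (U$j)^2 \<noteq> (Q^2) powi p * (V$a)^2"
    using cg unfolding c generic_on_vv_def by auto
  have "isCont (\<lambda>z. Lsum T Q K (fst z) (snd z)) c"
    by (rule Lsum_cont[OF T Q ab]) (use G in \<open>auto simp: c\<close>)
  then have "((\<lambda>z. Lsum T Q K (fst z) (snd z)) \<longlongrightarrow> Lsum T Q K (fst c) (snd c)) (at c within generic_pt Q)"
    by (rule cont_within)
  then show ?thesis by blast
qed

theorem corollary1:
  fixes T Q :: complex and K :: nat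
  assumes "T \<noteq> 0" and "Q \<noteq> 0"
    and "\<forall>m::nat. m > 0 \<longrightarrow> (Q^2)^m \<noteq> 1"
  shows "(\<forall>(i::'n::finite) j (p::int). i \<noteq> j \<longrightarrow>
            (\<forall>c \<in> generic_on_uu Q i j p.
               (\<exists>l. ((\<lambda>(U, V). Lsum T Q K U V) \<longlongrightarrow> l) (at c within generic_pt Q)) \<and>
               (\<exists>l. ((\<lambda>(U, V). Rsum T Q K U V) \<longlongrightarrow> l) (at c within generic_pt Q))))
       \<and> (\<forall>(a::'n) b (p::int). a \<noteq> b \<longrightarrow>
            (\<forall>c \<in> generic_on_vv Q a b p.
               (\<exists>l. ((\<lambda>(U, V). Lsum T Q K U V) \<longlongrightarrow> l) (at c within generic_pt Q)) \<and>
               (\<exists>l. ((\<lambda>(U, V). Rsum T Q K U V) \<longlongrightarrow> l) (at c within generic_pt Q))))"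
  unfolding cp
  apply (intro conjI allI impI ballI)
     apply (rule L_uu[OF assms]; assumption)
    apply (rule R_uu[OF assms(1,2)]; assumption)
   apply (rule L_vv[OF assms(1,2)]; assumption)
  apply (rule R_vv[OF assms]; assumption)
  done


end
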